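(* Let $B=B_G(\{p_i\mid i\in I\},\chi)$ and $\tilde B=B_{\tilde G}(\{\tilde p_i\mid i\in\tilde I\},\tilde\chi)$. Then $B\cong\tilde B$ as Hopf algebras if and only if $G=\tilde G$, $\{p_i\mid i\in I\}=\{\tilde p_i\mid i\in\tilde I\}$, and $\chi=\tilde\chi$.
   Context: $k$ is algebraically closed of characteristic zero. Data for $B_G(\{p_i\},\chi)$: $G$ a subgroup of $(\mathbb{Q},+)$ containing $\mathbb{Z}$, written $\{x^a:a\in G\}$ with $x^ax^{a'}=x^{a+a'}$; an index set $I$ with $|I|\ge2$; pairwise relatively prime integers $p_i\ge2$ ($i\in I$) with $1/p_i\in G$; $GM=\sum_iG(1/p_i)\subseteq\mathbb{Q}$; $\chi:GM\to k^\times$ a group homomorphism with $\chi(1/p_i^2)$ a primitive $p_i$-th root of unity for all $i$. $B_G(\{p_i\},\chi)$ is the algebra generated by $x^a$ ($a\in G$) and $y_i$ ($i\in I$) with relations $x^0=1$, $x^ax^{a'}=x^{a+a'}$, $x^ay_i=\chi(a/p_i)y_ix^a$, $y_iy_j=y_jy_i$, $y_i^{p_i}=y_j^{p_j}$, with Hopf structure $x^a$ grouplike, $\Delta(y_i)=y_i\otimes1+x^{1/p_i}\otimes y_i$, $\epsilon(y_i)=0$, $S(y_i)=-x^{-1/p_i}y_i$. Same for $\tilde B$ with the tilde data. *)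

theory Defs
  imports "HOL-Library.Poly_Mapping" "HOL-Computational_Algebra.Polynomial"
begin

definition alg_closed :: "'k::field itself \<Rightarrow> bool" where
  "alg_closed TYPE('k) \<longleftrightarrow> (\<forall>q::'k poly. degree q > 0 \<longrightarrow> (\<exists>x. poly q x = 0))"

definition GM :: "rat set \<Rightarrow> 'i set \<Rightarrow> ('i \<Rightarrow> nat) \<Rightarrow> rat set" where
  "GM G I p = {(\<Sum>i\<in>F. g i / of_nat (p i)) | F g. finite F \<and> F \<subseteq> I \<and> (\<forall>i\<in>F. g i \<in> G)}"

definition primitive_root :: "'k::field \<Rightarrow> nat \<Rightarrow> bool" where
  "primitive_root z n \<longleftrightarrow> z ^ n = 1 \<and> (\<forall>m. 0 < m \<and> m < n \<longrightarrow> z ^ m \<noteq> 1)"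

definition B_data :: "rat set \<Rightarrow> 'i set \<Rightarrow> ('i \<Rightarrow> nat) \<Rightarrow> (rat \<Rightarrow> 'k::field) \<Rightarrow> bool" where
  "B_data G I p \<chi> \<longleftrightarrow>
     \<comment> \<open>G a subgroup of (Q,+) containing Z\<close>
     (\<forall>a\<in>G. \<forall>b\<in>G. a + b \<in> G) \<and> (\<forall>a\<in>G. - a \<in> G) \<and> (\<forall>n::int. of_int n \<in> G) \<and>
     \<comment> \<open>|I| >= 2\<close>
     (\<exists>i\<in>I. \<exists>j\<in>I. i \<noteq> j) \<and>
     \<comment> \<open>pairwise relatively prime integers p_i >= 2 with 1/p_i in G\<close>
     (\<forall>i\<in>I. p i \<ge> 2) \<and> (\<forall>i\<in>I. \<forall>j\<in>I. i \<noteq> j \<longrightarrow> coprime (p i) (p j)) \<and>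
     (\<forall>i\<in>I. 1 / of_nat (p i) \<in> G) \<and>
     \<comment> \<open>chi : GM -> k^x a group homomorphism\<close>
     (\<forall>q\<in>GM G I p. \<chi> q \<noteq> 0) \<and>
     (\<forall>q\<in>GM G I p. \<forall>q'\<in>GM G I p. \<chi> (q + q') = \<chi> q * \<chi> q') \<and>
     \<comment> \<open>chi(1/p_i^2) a primitive p_i-th root of unity\<close>
     (\<forall>i\<in>I. primitive_root (\<chi> (1 / of_nat (p i) ^ 2)) (p i))"

datatype 'i gen = GX rat | GY 'i

type_synonym ('i, 'k) fa = "'i gen list \<Rightarrow>\<^sub>0 'k"
type_synonym ('i, 'k) ft = "('i gen list \<times> 'i gen list) \<Rightarrow>\<^sub>0 'k"

definition fa_mult :: "('i, 'k::comm_ring_1) fa \<Rightarrow> ('i, 'k) fa \<Rightarrow> ('i, 'k) fa" where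
  "fa_mult f g = (\<Sum>u\<in>Poly_Mapping.keys f. \<Sum>v\<in>Poly_Mapping.keys g. Poly_Mapping.single (u @ v) (Poly_Mapping.lookup f u * Poly_Mapping.lookup g v))"

definition fa_one :: "('i, 'k::comm_ring_1) fa" where
  "fa_one = Poly_Mapping.single [] 1"

definition fa_smult :: "'k::comm_ring_1 \<Rightarrow> ('i, 'k) fa \<Rightarrow> ('i, 'k) fa" where
  "fa_smult c f = fa_mult (Poly_Mapping.single [] c) f"

definition fa_X :: "rat \<Rightarrow> ('i, 'k::comm_ring_1) fa" where
  "fa_X a = Poly_Mapping.single [GX a] 1"

definition fa_Y :: "'i \<Rightarrow> ('i, 'k::comm_ring_1) fa" where
  "fa_Y i = Poly_Mapping.single [GY i] 1"

inductive_set fa_ideal :: "('i, 'k::comm_ring_1) fa set \<Rightarrow> ('i, 'k) fa set" for S where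
  gen: "s \<in> S \<Longrightarrow> s \<in> fa_ideal S"
| zero: "0 \<in> fa_ideal S"
| add: "a \<in> fa_ideal S \<Longrightarrow> b \<in> fa_ideal S \<Longrightarrow> a + b \<in> fa_ideal S"
| mult: "a \<in> fa_ideal S \<Longrightarrow> fa_mult (fa_mult u a) v \<in> fa_ideal S"

text \<open>Defining relations of B_G({p_i},chi).  Generators GX a with a not in G and GY i with
  i not in I are not generators of B; they are killed (set to 0).\<close>
definition B_rels :: "rat set \<Rightarrow> 'i set \<Rightarrow> ('i \<Rightarrow> nat) \<Rightarrow> (rat \<Rightarrow> 'k::comm_ring_1) \<Rightarrow> ('i, 'k) fa set" where
  "B_rels G I p \<chi> =
     {fa_X 0 - fa_one}
   \<union> {fa_mult (fa_X a) (fa_X a') - fa_X (a + a') | a a'. a \<in> G \<and> a' \<in> G}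
   \<union> {fa_mult (fa_X a) (fa_Y i) - fa_smult (\<chi> (a / of_nat (p i))) (fa_mult (fa_Y i) (fa_X a)) | a i. a \<in> G \<and> i \<in> I}
   \<union> {fa_mult (fa_Y i) (fa_Y j) - fa_mult (fa_Y j) (fa_Y i) | i j. i \<in> I \<and> j \<in> I}
   \<union> {Poly_Mapping.single (replicate (p i) (GY i)) 1 - Poly_Mapping.single (replicate (p j) (GY j)) 1 | i j. i \<in> I \<and> j \<in> I}
   \<union> {fa_X a | a. a \<notin> G}
   \<union> {fa_Y i | i. i \<notin> I}"

definition B_ideal :: "rat set \<Rightarrow> 'i set \<Rightarrow> ('i \<Rightarrow> nat) \<Rightarrow> (rat \<Rightarrow> 'k::comm_ring_1) \<Rightarrow> ('i, 'k) fa set" where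
  "B_ideal G I p \<chi> = fa_ideal (B_rels G I p \<chi>)"

definition ft_mult :: "('i, 'k::comm_ring_1) ft \<Rightarrow> ('i, 'k) ft \<Rightarrow> ('i, 'k) ft" where
  "ft_mult f g = (\<Sum>uv\<in>Poly_Mapping.keys f. \<Sum>uv'\<in>Poly_Mapping.keys g.
      Poly_Mapping.single (fst uv @ fst uv', snd uv @ snd uv') (Poly_Mapping.lookup f uv * Poly_Mapping.lookup g uv'))"

definition ft_smult :: "'k::comm_ring_1 \<Rightarrow> ('i, 'k) ft \<Rightarrow> ('i, 'k) ft" where
  "ft_smult c h = ft_mult (Poly_Mapping.single ([], []) c) h"

definition ft_tensor :: "('i, 'k::comm_ring_1) fa \<Rightarrow> ('i, 'k) fa \<Rightarrow> ('i, 'k) ft" where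
  "ft_tensor f g = (\<Sum>u\<in>Poly_Mapping.keys f. \<Sum>v\<in>Poly_Mapping.keys g. Poly_Mapping.single (u, v) (Poly_Mapping.lookup f u * Poly_Mapping.lookup g v))"

text \<open>R (x) F + F (x) R: kernel of F (x) F -> (F/R) (x) (F/R).\<close>
inductive_set ft_ideal :: "('i, 'k::comm_ring_1) fa set \<Rightarrow> ('i, 'k) ft set" for R where
  zero: "0 \<in> ft_ideal R"
| left: "r \<in> R \<Longrightarrow> ft_tensor r f \<in> ft_ideal R"
| right: "r \<in> R \<Longrightarrow> ft_tensor f r \<in> ft_ideal R"
| add: "a \<in> ft_ideal R \<Longrightarrow> b \<in> ft_ideal R \<Longrightarrow> a + b \<in> ft_ideal R"

fun delta_gen :: "('i \<Rightarrow> nat) \<Rightarrow> 'i gen \<Rightarrow> ('i, 'k::comm_ring_1) ft" where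
  "delta_gen p (GX a) = Poly_Mapping.single ([GX a], [GX a]) 1"
| "delta_gen p (GY i) = Poly_Mapping.single ([GY i], []) 1
                        + Poly_Mapping.single ([GX (1 / of_nat (p i))], [GY i]) 1"

fun delta_word :: "('i \<Rightarrow> nat) \<Rightarrow> 'i gen list \<Rightarrow> ('i, 'k::comm_ring_1) ft" where
  "delta_word p [] = Poly_Mapping.single ([], []) 1"
| "delta_word p (g # w) = ft_mult (delta_gen p g) (delta_word p w)"

definition B_Delta :: "('i \<Rightarrow> nat) \<Rightarrow> ('i, 'k::comm_ring_1) fa \<Rightarrow> ('i, 'k) ft" where
  "B_Delta p f = (\<Sum>w\<in>Poly_Mapping.keys f. ft_smult (Poly_Mapping.lookup f w) (delta_word p w))"

fun eps_gen :: "rat set \<Rightarrow> 'i gen \<Rightarrow> 'k::comm_ring_1" where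
  "eps_gen G (GX a) = (if a \<in> G then 1 else 0)"
| "eps_gen G (GY i) = 0"

definition B_eps :: "rat set \<Rightarrow> ('i, 'k::comm_ring_1) fa \<Rightarrow> 'k" where
  "B_eps G f = (\<Sum>w\<in>Poly_Mapping.keys f. Poly_Mapping.lookup f w * prod_list (map (eps_gen G) w))"

fun S_gen :: "('i \<Rightarrow> nat) \<Rightarrow> 'i gen \<Rightarrow> ('i, 'k::comm_ring_1) fa" where
  "S_gen p (GX a) = fa_X (- a)"
| "S_gen p (GY i) = - fa_mult (fa_X (- (1 / of_nat (p i)))) (fa_Y i)"

fun S_word :: "('i \<Rightarrow> nat) \<Rightarrow> 'i gen list \<Rightarrow> ('i, 'k::comm_ring_1) fa" where
  "S_word p [] = fa_one"
| "S_word p (g # w) = fa_mult (S_word p w) (S_gen p g)"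

definition B_S :: "('i \<Rightarrow> nat) \<Rightarrow> ('i, 'k::comm_ring_1) fa \<Rightarrow> ('i, 'k) fa" where
  "B_S p f = (\<Sum>w\<in>Poly_Mapping.keys f. fa_smult (Poly_Mapping.lookup f w) (S_word p w))"

section \<open>Hopf algebra isomorphisms B -> B~, given by a linear lift F -> F~\<close>

definition ft_map :: "(('i, 'k::comm_ring_1) fa \<Rightarrow> ('j, 'k) fa) \<Rightarrow> ('i, 'k) ft \<Rightarrow> ('j, 'k) ft" where
  "ft_map \<phi> h = (\<Sum>uv\<in>Poly_Mapping.keys h. ft_smult (Poly_Mapping.lookup h uv)
       (ft_tensor (\<phi> (Poly_Mapping.single (fst uv) 1)) (\<phi> (Poly_Mapping.single (snd uv) 1))))"

definition hopf_iso_B ::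
  "rat set \<Rightarrow> 'i set \<Rightarrow> ('i \<Rightarrow> nat) \<Rightarrow> (rat \<Rightarrow> 'k::field) \<Rightarrow>
   rat set \<Rightarrow> 'j set \<Rightarrow> ('j \<Rightarrow> nat) \<Rightarrow> (rat \<Rightarrow> 'k) \<Rightarrow>
   (('i, 'k) fa \<Rightarrow> ('j, 'k) fa) \<Rightarrow> bool" where
  "hopf_iso_B G I p \<chi> G' I' p' \<chi>' \<phi> \<longleftrightarrow>
     (let R = B_ideal G I p \<chi>; R' = B_ideal G' I' p' \<chi>' in
       \<comment> \<open>k-linear\<close>
       (\<forall>f g. \<phi> (f + g) = \<phi> f + \<phi> g) \<and> (\<forall>c f. \<phi> (fa_smult c f) = fa_smult c (\<phi> f)) \<and>
       \<comment> \<open>well defined and injective on the quotient\<close>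
       (\<forall>f. f \<in> R \<longleftrightarrow> \<phi> f \<in> R') \<and>
       \<comment> \<open>surjective on the quotient\<close>
       (\<forall>g. \<exists>f. g - \<phi> f \<in> R') \<and>
       \<comment> \<open>algebra map\<close>
       (\<forall>f g. \<phi> (fa_mult f g) - fa_mult (\<phi> f) (\<phi> g) \<in> R') \<and>
       \<phi> fa_one - fa_one \<in> R' \<and>
       \<comment> \<open>coalgebra map\<close>
       (\<forall>f. ft_map \<phi> (B_Delta p f) - B_Delta p' (\<phi> f) \<in> ft_ideal R') \<and>
       (\<forall>f. B_eps G' (\<phi> f) = B_eps G f) \<and>
       \<comment> \<open>compatible with antipodes\<close>
       (\<forall>f. \<phi> (B_S p f) - B_S p' (\<phi> f) \<in> R'))"

end

theory Submission
  imports Defs "HOL-Library.Product_Plus"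
begin


instantiation list :: (type) monoid_add
begin
definition zero_list :: "'a list" where "zero_list = []"
definition plus_list :: "'a list \<Rightarrow> 'a list \<Rightarrow> 'a list" where "plus_list xs ys = xs @ ys"
instance by standard (auto simp: zero_list_def plus_list_def)
end

lemma list_zero_eq: "(0::'a list) = []" by (simp add: zero_list_def)
lemma list_plus_eq [simp]: "(xs::'a list) + ys = xs @ ys" by (simp add: plus_list_def)

lemma single_Nil [simp]: "Poly_Mapping.single [] c = Poly_Mapping.single 0 c"
  by (simp add: zero_list_def)
lemma single_NilNil [simp]: "Poly_Mapping.single ([],[]) c = Poly_Mapping.single 0 c"
  by (simp add: zero_list_def zero_prod_def)

lemma zero_list_append [simp]: "(0::'a list) @ xs = xs" by (simp add: zero_list_def)
lemma append_zero_list [simp]: "xs @ (0::'a list) = xs" by (simp add: zero_list_def)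
lemma zero_list_Cons [simp]: "(0::'a list) \<noteq> x # xs" "x # xs \<noteq> (0::'a list)" by (simp_all add: zero_list_def)

lemma pm_expansion:
  "f = (\<Sum>w\<in>Poly_Mapping.keys f. Poly_Mapping.single w (Poly_Mapping.lookup f w))"
proof -
  have *: "finite S \<Longrightarrow> Poly_Mapping.lookup (\<Sum>w\<in>S. Poly_Mapping.single w (Poly_Mapping.lookup f w)) x
        = (if x \<in> S then Poly_Mapping.lookup f x else 0)" for S x
    by (induction S rule: finite_induct) (auto simp: lookup_single lookup_add when_def)
  show ?thesis
    by (rule poly_mapping_eqI) (auto simp: * in_keys_iff)
qed

lemma pm_induct [case_names zero single_add]:
  fixes f :: "'a \<Rightarrow>\<^sub>0 'b::comm_monoid_add"
  assumes z: "P 0" and s: "\<And>w c f. P f \<Longrightarrow> P (Poly_Mapping.single w c + f)"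
  shows "P f"
proof -
  have "P (\<Sum>w\<in>S. Poly_Mapping.single w (Poly_Mapping.lookup f w))" if "finite S" for S
    using that by (induction S rule: finite_induct) (auto simp: z s)
  then show ?thesis by (subst pm_expansion) simp
qed

definition lext :: "('w \<Rightarrow> ('x::monoid_add \<Rightarrow>\<^sub>0 'k::comm_ring_1)) \<Rightarrow> ('w \<Rightarrow>\<^sub>0 'k) \<Rightarrow> ('x \<Rightarrow>\<^sub>0 'k)" where
  "lext P f = (\<Sum>w\<in>Poly_Mapping.keys f. Poly_Mapping.single 0 (Poly_Mapping.lookup f w) * P w)"

lemma lext_zero [simp]: "lext P 0 = 0"
  by (simp add: lext_def)

lemma lext_single [simp]: "lext P (Poly_Mapping.single w c) = Poly_Mapping.single 0 c * P w"
  by (cases "c = 0") (simp_all add: lext_def)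

lemma lext_add: "lext P (f + g) = lext P f + lext P g"
proof -
  let ?K = "Poly_Mapping.keys f \<union> Poly_Mapping.keys g"
  have e: "lext P h = (\<Sum>w\<in>?K. Poly_Mapping.single 0 (Poly_Mapping.lookup h w) * P w)"
    if "Poly_Mapping.keys h \<subseteq> ?K" for h
    unfolding lext_def
    by (rule sum.mono_neutral_left) (use that in \<open>auto simp: in_keys_iff\<close>)
  have "lext P (f + g) = (\<Sum>w\<in>?K. Poly_Mapping.single 0 (Poly_Mapping.lookup (f+g) w) * P w)"
    by (rule e) (auto simp: in_keys_iff lookup_add)
  also have "\<dots> = (\<Sum>w\<in>?K. Poly_Mapping.single 0 (Poly_Mapping.lookup f w) * P w
                          + Poly_Mapping.single 0 (Poly_Mapping.lookup g w) * P w)"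
    by (simp add: lookup_add single_add distrib_right)
  also have "\<dots> = lext P f + lext P g"
    by (simp add: sum.distrib e)
  finally show ?thesis .
qed

lemma lext_sum: "lext P (\<Sum>i\<in>S. g i) = (\<Sum>i\<in>S. lext P (g i))"
  by (induction S rule: infinite_finite_induct) (auto simp: lext_add)

lemma lext_uminus: "lext P (- f) = - lext P f"
  using lext_add[of P f "-f"] by (simp add: eq_neg_iff_add_eq_0 add.commute)

lemma lext_diff: "lext P (f - g) = lext P f - lext P g"
  using lext_add[of P f "-g"] by (simp add: lext_uminus)

lemma single0_central:
  fixes x :: "'x::monoid_add \<Rightarrow>\<^sub>0 'k::comm_ring_1"
  shows "Poly_Mapping.single 0 c * x = x * Poly_Mapping.single 0 c"
proof (induction x rule: pm_induct)
  case zero then show ?case by simp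
next
  case (single_add w a f)
  then show ?case by (simp add: distrib_left distrib_right mult_single mult.commute)
qed

lemma single0_mult: "Poly_Mapping.single (0::'x::monoid_add) a * Poly_Mapping.single 0 (b::'k::comm_ring_1)
   = Poly_Mapping.single 0 (a*b)"
  by (simp add: mult_single)

lemma scalar_pull:
  fixes X Y :: "'x::monoid_add \<Rightarrow>\<^sub>0 'k::comm_ring_1"
  shows "Poly_Mapping.single 0 a * X * (Poly_Mapping.single 0 b * Y)
       = Poly_Mapping.single 0 (a * b) * (X * Y)"
proof -
  have "Poly_Mapping.single 0 a * X * (Poly_Mapping.single 0 b * Y)
      = Poly_Mapping.single 0 a * (X * Poly_Mapping.single 0 b) * Y" by (simp add: mult.assoc)
  also have "\<dots> = Poly_Mapping.single 0 a * (Poly_Mapping.single 0 b * X) * Y"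
    by (simp add: single0_central)
  finally show ?thesis by (simp add: mult.assoc single0_mult[symmetric])
qed

lemma lext_scale:
  fixes f :: "'w::monoid_add \<Rightarrow>\<^sub>0 'k::comm_ring_1"
  shows "lext P (Poly_Mapping.single 0 c * f) = Poly_Mapping.single 0 c * lext P f"
proof (induction f rule: pm_induct)
  case zero then show ?case by simp
next
  case (single_add w a f)
  then show ?case
    by (simp add: distrib_left lext_add mult_single mult.assoc[symmetric] single0_mult)
qed

lemma lext_mult:
  fixes f g :: "'w::monoid_add \<Rightarrow>\<^sub>0 'k::comm_ring_1"
  assumes P: "\<And>u v. P (u + v) = P u * P v"
  shows "lext P (f * g) = lext P f * lext P g"
proof (induction f rule: pm_induct)
  case zero then show ?case by simp
next
  case (single_add u a f)
  have "lext P (Poly_Mapping.single u a * g) = lext P (Poly_Mapping.single u a) * lext P g"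
  proof (induction g rule: pm_induct)
    case zero then show ?case by simp
  next
    case (single_add v b g)
    have "Poly_Mapping.single 0 (a * b) * P (u + v)
       = Poly_Mapping.single 0 a * P u * (Poly_Mapping.single 0 b * P v)"
      by (simp add: P scalar_pull)
    with single_add show ?case
      by (simp add: distrib_left lext_add mult_single)
  qed
  with single_add show ?case by (simp add: distrib_right lext_add)
qed

lemma lext_mult2:
  fixes f g :: "'w::monoid_add \<Rightarrow>\<^sub>0 'k::comm_ring_1"
  assumes P: "\<And>u v. P (u + v) = P1 u * P2 v + P3 u * P4 v"
  shows "lext P (f * g) = lext P1 f * lext P2 g + lext P3 f * lext P4 g"
proof (induction f rule: pm_induct)
  case zero then show ?case by simp
next
  case (single_add u a f)
  have "lext P (Poly_Mapping.single u a * g) = lext P1 (Poly_Mapping.single u a) * lext P2 g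
           + lext P3 (Poly_Mapping.single u a) * lext P4 g"
  proof (induction g rule: pm_induct)
    case zero then show ?case by simp
  next
    case (single_add v b g)
    have "Poly_Mapping.single 0 (a * b) * P (u + v)
       = Poly_Mapping.single 0 a * P1 u * (Poly_Mapping.single 0 b * P2 v)
       + Poly_Mapping.single 0 a * P3 u * (Poly_Mapping.single 0 b * P4 v)"
      by (simp add: P scalar_pull distrib_left)
    with single_add show ?case
      by (simp add: distrib_left lext_add mult_single algebra_simps)
  qed
  with single_add show ?case by (simp add: distrib_right lext_add algebra_simps)
qed

lemma lext_antimult:
  fixes f g :: "'w::monoid_add \<Rightarrow>\<^sub>0 'k::comm_ring_1"
  assumes P: "\<And>u v. P (u + v) = P v * P u"
  shows "lext P (f * g) = lext P g * lext P f"
proof (induction f rule: pm_induct)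
  case zero then show ?case by simp
next
  case (single_add u a f)
  have "lext P (Poly_Mapping.single u a * g) = lext P g * lext P (Poly_Mapping.single u a)"
  proof (induction g rule: pm_induct)
    case zero then show ?case by simp
  next
    case (single_add v b g)
    have "Poly_Mapping.single 0 (a * b) * P (u + v)
       = Poly_Mapping.single 0 b * P v * (Poly_Mapping.single 0 a * P u)"
      by (simp add: P scalar_pull mult.commute[of a b])
    with single_add show ?case
      by (simp add: distrib_left distrib_right lext_add mult_single)
  qed
  with single_add show ?case by (simp add: distrib_right distrib_left lext_add)
qed

lemma lext_cong: "(\<And>w. w \<in> Poly_Mapping.keys f \<Longrightarrow> P w = Q w) \<Longrightarrow> lext P f = lext Q f"
  by (simp add: lext_def)

lemma lext_compose:
  fixes f :: "'w \<Rightarrow>\<^sub>0 'k::comm_ring_1"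
  shows "lext Q (lext P f) = lext (\<lambda>w. lext Q (P w)) f"
proof (induction f rule: pm_induct)
  case zero then show ?case by simp
next
  case (single_add w c f)
  then show ?case by (simp add: lext_add lext_scale)
qed

lemma lext_id: "lext (\<lambda>w. Poly_Mapping.single w 1) f = f"
proof (induction f rule: pm_induct)
  case zero then show ?case by simp
next
  case (single_add w c f)
  then show ?case by (simp add: lext_add mult_single)
qed


abbreviation sng :: "'a \<Rightarrow> 'b \<Rightarrow> 'a \<Rightarrow>\<^sub>0 'b::zero" where "sng \<equiv> Poly_Mapping.single"
abbreviation lkp :: "('a \<Rightarrow>\<^sub>0 'b::zero) \<Rightarrow> 'a \<Rightarrow> 'b" where "lkp \<equiv> Poly_Mapping.lookup"
abbreviation kys :: "('a \<Rightarrow>\<^sub>0 'b::zero) \<Rightarrow> 'a set" where "kys \<equiv> Poly_Mapping.keys"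

lemma pm_mult_expand:
  fixes f g :: "'w::monoid_add \<Rightarrow>\<^sub>0 'k::comm_ring_1"
  shows "f * g = (\<Sum>u\<in>kys f. \<Sum>v\<in>kys g. sng (u + v) (lkp f u * lkp g v))"
proof -
  have "f * g = (\<Sum>u\<in>kys f. sng u (lkp f u)) * (\<Sum>v\<in>kys g. sng v (lkp g v))"
    using pm_expansion[of f] pm_expansion[of g] by simp
  also have "\<dots> = (\<Sum>u\<in>kys f. \<Sum>v\<in>kys g. sng u (lkp f u) * sng v (lkp g v))"
    by (simp add: sum_product)
  finally show ?thesis by (simp add: mult_single)
qed

lemma fa_mult_eq [simp]: "fa_mult f g = f * g"
  unfolding fa_mult_def by (simp add: pm_mult_expand)

lemma fa_one_eq [simp]: "fa_one = 1"
  by (simp add: fa_one_def)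

lemma fa_smult_eq [simp]: "fa_smult c f = sng 0 c * f"
  by (simp add: fa_smult_def)

lemma ft_mult_eq [simp]: "ft_mult f g = f * g"
  unfolding ft_mult_def by (simp add: pm_mult_expand plus_prod_def)

lemma ft_smult_eq [simp]: "ft_smult c f = sng 0 c * f"
  by (simp add: ft_smult_def zero_prod_def)

definition tl1 :: "('i,'k::comm_ring_1) fa \<Rightarrow> ('i,'k) ft" where
  "tl1 = lext (\<lambda>u. sng (u, []) 1)"
definition tr1 :: "('i,'k::comm_ring_1) fa \<Rightarrow> ('i,'k) ft" where
  "tr1 = lext (\<lambda>v. sng ([], v) 1)"

lemma ft_tensor_eq: "ft_tensor f g = tl1 f * tr1 g"
proof -
  have "tl1 f * tr1 g = (\<Sum>u\<in>kys f. \<Sum>v\<in>kys g. sng 0 (lkp f u) * sng (u,[]) 1 * (sng 0 (lkp g v) * sng ([],v) 1))"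
    by (simp add: tl1_def tr1_def lext_def sum_product)
  also have "\<dots> = ft_tensor f g"
    unfolding ft_tensor_def by (simp add: scalar_pull mult_single)
  finally show ?thesis by simp
qed

lemma delta_word_append: "delta_word p (u @ v) = delta_word p u * delta_word p v"
  by (induction u) (simp_all add: mult.assoc)

lemma B_Delta_eq: "B_Delta p = lext (delta_word p)"
  by (simp add: fun_eq_iff B_Delta_def lext_def)

lemma B_Delta_mult: "B_Delta p (f * g) = B_Delta p f * B_Delta p g"
  by (simp add: B_Delta_eq lext_mult delta_word_append)

lemma S_word_append: "S_word p (u @ v) = S_word p v * S_word p u"
  by (induction u) (simp_all add: mult.assoc)

lemma B_S_eq: "B_S p = lext (S_word p)"
  by (simp add: fun_eq_iff B_S_def lext_def)

lemma ft_map_eq: "ft_map \<phi> = lext (\<lambda>uv. ft_tensor (\<phi> (sng (fst uv) 1)) (\<phi> (sng (snd uv) 1)))"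
  by (simp add: fun_eq_iff ft_map_def lext_def)

definition epsw :: "rat set \<Rightarrow> 'i gen list \<Rightarrow> 'k::comm_ring_1" where
  "epsw G w = prod_list (map (eps_gen G) w)"

lemma B_eps_eq: "B_eps G f = lkp (lext (\<lambda>w. sng (0::rat) (epsw G w)) f) 0"
  by (simp add: B_eps_def lext_def lookup_sum mult_single epsw_def)

lemma B_eps_add: "B_eps G (f + g) = B_eps G f + B_eps G g"
  by (simp add: B_eps_eq lext_add lookup_add)

lemma B_eps_single: "B_eps G (sng w c) = c * epsw G w"
  by (simp add: B_eps_eq mult_single)

lemma fa_ideal_mult3: "a \<in> fa_ideal S \<Longrightarrow> u * a * v \<in> fa_ideal S"
  using fa_ideal.mult[of a S u v] by simp

lemma fa_ideal_mult_left: "a \<in> fa_ideal S \<Longrightarrow> u * a \<in> fa_ideal S"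
  using fa_ideal.mult[of a S u 1] by simp

lemma fa_ideal_mult_right: "a \<in> fa_ideal S \<Longrightarrow> a * v \<in> fa_ideal S"
  using fa_ideal.mult[of a S 1 v] by simp

lemma fa_ideal_uminus: "a \<in> fa_ideal S \<Longrightarrow> - a \<in> fa_ideal S"
  using fa_ideal_mult_left[of a S "-1"] by simp

lemma fa_ideal_diff: "a \<in> fa_ideal S \<Longrightarrow> b \<in> fa_ideal S \<Longrightarrow> a - b \<in> fa_ideal S"
  using fa_ideal.add[of a S "-b"] fa_ideal_uminus by auto

lemma fa_ideal_sum: "(\<And>i. i \<in> A \<Longrightarrow> g i \<in> fa_ideal S) \<Longrightarrow> (\<Sum>i\<in>A. g i) \<in> fa_ideal S"
  by (induction A rule: infinite_finite_induct) (simp_all add: fa_ideal.zero fa_ideal.add)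

lemma fa_ideal_lext:
  "(\<And>w. w \<in> kys f \<Longrightarrow> P w \<in> fa_ideal S) \<Longrightarrow> lext P f \<in> fa_ideal S"
  unfolding lext_def by (rule fa_ideal_sum) (auto intro: fa_ideal_mult_left)

lemma fa_ideal_sub: "\<lbrakk> a \<in> fa_ideal S; \<And>s. s \<in> S \<Longrightarrow> s \<in> fa_ideal T \<rbrakk> \<Longrightarrow> a \<in> fa_ideal T"
proof (induction a rule: fa_ideal.induct)
  case (mult a u v) then show ?case by (simp add: fa_ideal_mult3)
qed (simp_all add: fa_ideal.gen fa_ideal.zero fa_ideal.add)

lemma fa_ideal_induct_hom:
  assumes "a \<in> fa_ideal S"
    and "\<And>s. s \<in> S \<Longrightarrow> h s \<in> fa_ideal T"
    and "h 0 = 0" and "\<And>x y. h (x + y) = h x + h y" and "\<And>x y z. h (x * y * z) = h x * h y * h z"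
  shows "h a \<in> fa_ideal T"
  using assms(1)
proof (induction a rule: fa_ideal.induct)
  case (gen s) then show ?case using assms(2) by blast
next
  case zero then show ?case using assms(3) fa_ideal.zero by metis
next
  case (add a b) then show ?case using assms(4) fa_ideal.add by metis
next
  case (mult a u v)
  then show ?case using assms(5)[of u a v] by (simp add: fa_ideal_mult3)
qed


type_synonym 'k kQ = "rat \<Rightarrow>\<^sub>0 'k"

fun pigen :: "rat set \<Rightarrow> 'i gen \<Rightarrow> 'k::comm_ring_1 kQ" where
  "pigen G (GX a) = (if a \<in> G then sng a 1 else 0)"
| "pigen G (GY i) = 0"

fun tgen :: "rat set \<Rightarrow> ('i \<Rightarrow> nat) \<Rightarrow> (rat \<Rightarrow> 'k::field) \<Rightarrow> 'i \<Rightarrow> 'i gen \<Rightarrow> 'k kQ" where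
  "tgen G p \<chi> j (GX a) = (if a \<in> G then sng a (inverse (\<chi> (a / of_nat (p j)))) else 0)"
| "tgen G p \<chi> j (GY i) = 0"

fun mugen :: "'i \<Rightarrow> 'i gen \<Rightarrow> 'k::comm_ring_1 kQ" where
  "mugen j (GX a) = 0"
| "mugen j (GY i) = (if i = j then 1 else 0)"

fun wprod :: "('g \<Rightarrow> 'r::monoid_mult) \<Rightarrow> 'g list \<Rightarrow> 'r" where
  "wprod e [] = 1"
| "wprod e (g # w) = e g * wprod e w"

lemma wprod_append: "wprod e (u @ v) = wprod e u * wprod e v"
  by (induction u) (simp_all add: mult.assoc)

definition piw where "piw G = wprod (pigen G)"
definition tw where "tw G p \<chi> j = wprod (tgen G p \<chi> j)"

fun muw :: "rat set \<Rightarrow> ('i \<Rightarrow> nat) \<Rightarrow> (rat \<Rightarrow> 'k::field) \<Rightarrow> 'i \<Rightarrow> 'i gen list \<Rightarrow> 'k kQ" where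
  "muw G p \<chi> j [] = 0"
| "muw G p \<chi> j (g # w) = pigen G g * muw G p \<chi> j w + mugen j g * tw G p \<chi> j w"

lemma piw_simps [simp]: "piw G [] = 1" "piw G (g # w) = pigen G g * piw G w"
  by (simp_all add: piw_def)
lemma tw_simps [simp]: "tw G p \<chi> j [] = 1" "tw G p \<chi> j (g # w) = tgen G p \<chi> j g * tw G p \<chi> j w"
  by (simp_all add: tw_def)

lemma piw_zero [simp]: "piw G 0 = 1" by (simp add: zero_list_def)
lemma tw_zero [simp]: "tw G p \<chi> j 0 = 1" by (simp add: zero_list_def)
lemma muw_zero [simp]: "muw G p \<chi> j 0 = 0" by (simp add: zero_list_def)

lemma piw_append: "piw G (u @ v) = piw G u * piw G v"
  by (simp add: piw_def wprod_append)
lemma tw_append: "tw G p \<chi> j (u @ v) = tw G p \<chi> j u * tw G p \<chi> j v"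
  by (simp add: tw_def wprod_append)
lemma muw_append: "muw G p \<chi> j (u @ v) = piw G u * muw G p \<chi> j v + muw G p \<chi> j u * tw G p \<chi> j v"
  by (induction u) (simp_all add: tw_append algebra_simps)

definition pim :: "rat set \<Rightarrow> ('i,'k::comm_ring_1) fa \<Rightarrow> 'k kQ" where
  "pim G = lext (piw G)"
definition taum :: "rat set \<Rightarrow> ('i \<Rightarrow> nat) \<Rightarrow> (rat \<Rightarrow> 'k::field) \<Rightarrow> 'i \<Rightarrow> ('i,'k) fa \<Rightarrow> 'k kQ" where
  "taum G p \<chi> j = lext (tw G p \<chi> j)"
definition mum :: "rat set \<Rightarrow> ('i \<Rightarrow> nat) \<Rightarrow> (rat \<Rightarrow> 'k::field) \<Rightarrow> 'i \<Rightarrow> ('i,'k) fa \<Rightarrow> 'k kQ" where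
  "mum G p \<chi> j = lext (muw G p \<chi> j)"

lemma pim_mult: "pim G (f * g) = pim G f * pim G g"
  unfolding pim_def by (rule lext_mult) (simp add: piw_append)
lemma taum_mult: "taum G p \<chi> j (f * g) = taum G p \<chi> j f * taum G p \<chi> j g"
  unfolding taum_def by (rule lext_mult) (simp add: tw_append)
lemma mum_mult: "mum G p \<chi> j (f * g) = pim G f * mum G p \<chi> j g + mum G p \<chi> j f * taum G p \<chi> j g"
  unfolding mum_def pim_def taum_def by (rule lext_mult2) (simp add: muw_append)

lemma pim_add: "pim G (f + g) = pim G f + pim G g" by (simp add: pim_def lext_add)
lemma taum_add: "taum G p \<chi> j (f + g) = taum G p \<chi> j f + taum G p \<chi> j g" by (simp add: taum_def lext_add)
lemma mum_add: "mum G p \<chi> j (f + g) = mum G p \<chi> j f + mum G p \<chi> j g" by (simp add: mum_def lext_add)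
lemma pim_diff: "pim G (f - g) = pim G f - pim G g" by (simp add: pim_def lext_diff)
lemma taum_diff: "taum G p \<chi> j (f - g) = taum G p \<chi> j f - taum G p \<chi> j g" by (simp add: taum_def lext_diff)
lemma mum_diff: "mum G p \<chi> j (f - g) = mum G p \<chi> j f - mum G p \<chi> j g" by (simp add: mum_def lext_diff)
lemma pim_single [simp]: "pim G (sng w c) = sng 0 c * piw G w" by (simp add: pim_def)
lemma taum_single [simp]: "taum G p \<chi> j (sng w c) = sng 0 c * tw G p \<chi> j w" by (simp add: taum_def)
lemma mum_single [simp]: "mum G p \<chi> j (sng w c) = sng 0 c * muw G p \<chi> j w" by (simp add: mum_def)
lemma one_Nil: "(1::('i,'k::comm_ring_1) fa) = sng [] 1" by simp
lemma pim_one [simp]: "pim G 1 = 1" by (subst one_Nil, simp only: pim_single piw_simps) simp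
lemma taum_one [simp]: "taum G p \<chi> j 1 = 1" by (subst one_Nil, simp only: taum_single tw_simps) simp
lemma mum_one [simp]: "mum G p \<chi> j 1 = 0" by (subst one_Nil, simp only: mum_single muw.simps) simp

lemma GM_mem: "i \<in> I \<Longrightarrow> a \<in> G \<Longrightarrow> a / of_nat (p i) \<in> GM G I p"
  unfolding GM_def
  by (rule CollectI, rule exI[of _ "{i}"], rule exI[of _ "\<lambda>_. a"]) simp

lemma GM_zero: "0 \<in> GM G I p"
  unfolding GM_def by (rule CollectI, rule exI[of _ "{}"]) simp

context
  fixes G :: "rat set" and I :: "'i set" and p :: "'i \<Rightarrow> nat" and \<chi> :: "rat \<Rightarrow> 'k::field"
  assumes D: "B_data G I p \<chi>"
begin

lemma D_add: "a \<in> G \<Longrightarrow> b \<in> G \<Longrightarrow> a + b \<in> G" using D unfolding B_data_def by blast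
lemma D_neg: "a \<in> G \<Longrightarrow> - a \<in> G" using D unfolding B_data_def by blast
lemma D_int: "of_int n \<in> G" using D unfolding B_data_def by blast
lemma D_zero: "0 \<in> G" using D_int[of 0] by simp
lemma D_p2: "i \<in> I \<Longrightarrow> p i \<ge> 2" using D unfolding B_data_def by blast
lemma D_cop: "i \<in> I \<Longrightarrow> j \<in> I \<Longrightarrow> i \<noteq> j \<Longrightarrow> coprime (p i) (p j)" using D unfolding B_data_def by blast
lemma D_inv: "i \<in> I \<Longrightarrow> 1 / of_nat (p i) \<in> G" using D unfolding B_data_def by blast
lemma D_nz: "q \<in> GM G I p \<Longrightarrow> \<chi> q \<noteq> 0" using D unfolding B_data_def by blast
lemma D_hom: "q \<in> GM G I p \<Longrightarrow> q' \<in> GM G I p \<Longrightarrow> \<chi> (q + q') = \<chi> q * \<chi> q'" using D unfolding B_data_def by blast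
lemma D_prim: "i \<in> I \<Longrightarrow> primitive_root (\<chi> (1 / of_nat (p i) ^ 2)) (p i)" using D unfolding B_data_def by blast
lemma D_two: "\<exists>i\<in>I. \<exists>j\<in>I. i \<noteq> j" using D unfolding B_data_def by blast

lemma D_chi0: "\<chi> 0 = 1"
proof -
  have "\<chi> 0 * \<chi> 0 = \<chi> 0 * 1" using D_hom[OF GM_zero GM_zero] by simp
  then show ?thesis using D_nz[OF GM_zero] mult_left_cancel by blast
qed

lemma D_chi_ne1: "i \<in> I \<Longrightarrow> \<chi> ((1 / of_nat (p i)) / of_nat (p i)) \<noteq> 1"
proof -
  assume i: "i \<in> I"
  have "(1 / of_nat (p i) :: rat) / of_nat (p i) = 1 / of_nat (p i) ^ 2" by (simp add: power2_eq_square)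
  moreover have "0 < (1::nat) \<and> 1 < p i" using D_p2[OF i] by simp
  then have "\<chi> (1 / of_nat (p i) ^ 2) ^ 1 \<noteq> 1"
    using D_prim[OF i] unfolding primitive_root_def by blast
  ultimately show ?thesis by simp
qed

lemma D_chi_div_add: "i \<in> I \<Longrightarrow> a \<in> G \<Longrightarrow> b \<in> G \<Longrightarrow>
   \<chi> ((a + b) / of_nat (p i)) = \<chi> (a / of_nat (p i)) * \<chi> (b / of_nat (p i))"
  by (simp add: add_divide_distrib D_hom GM_mem)

lemma piw_Y: "GY i \<in> set w \<Longrightarrow> piw G w = 0"
  by (induction w) auto
lemma tw_Y: "GY i \<in> set w \<Longrightarrow> tw G p \<chi> j w = 0"
  by (induction w) auto

lemma muw_replicate: "n \<ge> 2 \<Longrightarrow> muw G p \<chi> j (replicate n (GY i)) = 0"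
proof -
  assume "n \<ge> 2"
  then obtain m where "n = Suc (Suc m)" by (metis add_2_eq_Suc le_Suc_ex)
  then show ?thesis by (simp add: piw_Y tw_Y)
qed

lemma rels_killed:
  assumes r: "r \<in> B_rels G I p \<chi>" and j: "j \<in> I"
  shows "pim G r = 0 \<and> taum G p \<chi> j r = 0 \<and> mum G p \<chi> j r = 0"
  using r unfolding B_rels_def
proof (elim UnE)
  assume "r \<in> {fa_X 0 - fa_one}"
  then have r: "r = sng [GX 0] 1 - 1" by (simp only: fa_X_def fa_one_eq singleton_iff)
  have "pim G r = 0" by (simp add: r pim_diff D_zero)
  moreover have "taum G p \<chi> j r = 0" by (simp add: r taum_diff D_zero D_chi0)
  moreover have "mum G p \<chi> j r = 0" by (simp add: r mum_diff)
  ultimately show ?thesis by simp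
next
  assume "r \<in> {fa_mult (fa_X a) (fa_X a') - fa_X (a + a') |a a'. a \<in> G \<and> a' \<in> G}"
  then obtain a a' where r: "r = fa_mult (fa_X a) (fa_X a') - fa_X (a + a')" and a: "a \<in> G" "a' \<in> G"
    by blast
  have "a + a' \<in> G" using a D_add by blast
  then show ?thesis using a j
    by (simp add: r fa_X_def pim_diff taum_diff mum_diff pim_mult taum_mult mum_mult mult_single D_chi_div_add
        add_divide_distrib[symmetric])
next
  assume "r \<in> {fa_mult (fa_X a) (fa_Y i) - fa_smult (\<chi> (a / of_nat (p i))) (fa_mult (fa_Y i) (fa_X a)) |a i.
     a \<in> G \<and> i \<in> I}"
  then obtain a i where r: "r = fa_mult (fa_X a) (fa_Y i) - fa_smult (\<chi> (a / of_nat (p i))) (fa_mult (fa_Y i) (fa_X a))"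
    and a: "a \<in> G" "i \<in> I"
    by blast
  have nz: "\<chi> (a / of_nat (p i)) \<noteq> 0" using D_nz[OF GM_mem[OF a(2) a(1)]] .
  have r2: "r = sng [GX a, GY i] 1 - sng [GY i, GX a] (\<chi> (a / of_nat (p i)))"
    by (simp add: r fa_X_def fa_Y_def mult_single)
  have "mum G p \<chi> j r = 0"
    using a nz by (cases "i = j") (simp_all add: r2 mum_diff mult_single)
  moreover have "pim G r = 0" by (simp add: r2 pim_diff)
  moreover have "taum G p \<chi> j r = 0" by (simp add: r2 taum_diff)
  ultimately show ?thesis by simp
next
  assume "r \<in> {fa_mult (fa_Y i) (fa_Y j) - fa_mult (fa_Y j) (fa_Y i) |i j. i \<in> I \<and> j \<in> I}"
  then obtain i k where r: "r = fa_mult (fa_Y i) (fa_Y k) - fa_mult (fa_Y k) (fa_Y i)"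
    by blast
  show ?thesis by (simp add: r fa_Y_def pim_diff taum_diff mum_diff pim_mult taum_mult mum_mult)
next
  assume "r \<in> {Poly_Mapping.single (replicate (p i) (GY i)) 1 - Poly_Mapping.single (replicate (p j) (GY j)) 1 |i j.
     i \<in> I \<and> j \<in> I}"
  then obtain i k where r: "r = sng (replicate (p i) (GY i)) 1 - sng (replicate (p k) (GY k)) 1"
    and ik: "i \<in> I" "k \<in> I" by blast
  have "GY i \<in> set (replicate (p i) (GY i))" "GY k \<in> set (replicate (p k) (GY k))"
    using D_p2[OF ik(1)] D_p2[OF ik(2)] by auto
  then show ?thesis using D_p2[OF ik(1)] D_p2[OF ik(2)]
    by (simp add: r pim_diff taum_diff mum_diff piw_Y tw_Y muw_replicate)
next
  assume "r \<in> {fa_X a |a. a \<notin> G}"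
  then obtain a where "r = fa_X a" "a \<notin> G" by blast
  then show ?thesis by (simp add: fa_X_def)
next
  assume "r \<in> {fa_Y i |i. i \<notin> I}"
  then obtain i where "r = fa_Y i" "i \<notin> I" by blast
  then show ?thesis using j by (auto simp: fa_Y_def)
qed

lemma ideal_killed:
  assumes r: "r \<in> B_ideal G I p \<chi>" and j: "j \<in> I"
  shows "pim G r = 0 \<and> taum G p \<chi> j r = 0 \<and> mum G p \<chi> j r = 0"
  using r unfolding B_ideal_def
proof (induction r rule: fa_ideal.induct)
  case (gen s) then show ?case using rels_killed j by blast
next
  case zero then show ?case by (simp add: pim_def taum_def mum_def)
next
  case (add a b) then show ?case by (simp add: pim_add taum_add mum_add)
next
  case (mult a u v)
  then show ?case by (simp add: pim_mult taum_mult mum_mult)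
qed

end


type_synonym 'k kQ2 = "(rat \<times> rat) \<Rightarrow>\<^sub>0 'k"

definition emb1 :: "'k::comm_ring_1 kQ \<Rightarrow> 'k kQ2" where "emb1 = lext (\<lambda>e. sng (e, 0) 1)"
definition emb2 :: "'k::comm_ring_1 kQ \<Rightarrow> 'k kQ2" where "emb2 = lext (\<lambda>e. sng (0, e) 1)"
definition box :: "'k::comm_ring_1 kQ \<Rightarrow> 'k kQ \<Rightarrow> 'k kQ2" where "box x y = emb1 x * emb2 y"
definition Dk :: "'k::comm_ring_1 kQ \<Rightarrow> 'k kQ2" where "Dk = lext (\<lambda>e. sng (e, e) 1)"

lemma emb1_mult: "emb1 (x * y) = emb1 x * emb1 y"
  unfolding emb1_def by (rule lext_mult) (simp add: mult_single)
lemma emb2_mult: "emb2 (x * y) = emb2 x * emb2 y"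
  unfolding emb2_def by (rule lext_mult) (simp add: mult_single)
lemma Dk_mult: "Dk (x * y) = Dk x * Dk y"
  unfolding Dk_def by (rule lext_mult) (simp add: mult_single)
lemma Dk_add: "Dk (x + y) = Dk x + Dk y" by (simp add: Dk_def lext_add)
lemma Dk_single [simp]: "Dk (sng a c) = sng (a, a) c" by (simp add: Dk_def mult_single)
lemma Dk_one [simp]: "Dk 1 = 1"
  by (metis Dk_single single_one zero_prod_def)
lemma Dk_zero [simp]: "Dk 0 = 0" by (simp add: Dk_def)

lemma box_add_left: "box (x + x') y = box x y + box x' y"
  by (simp add: box_def emb1_def lext_add distrib_right)
lemma box_add_right: "box x (y + y') = box x y + box x y'"
  by (simp add: box_def emb2_def lext_add distrib_left)
lemma box_zero [simp]: "box 0 y = 0" "box x 0 = 0"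
  by (simp_all add: box_def emb1_def emb2_def)
lemma box_mult: "box (a * b) (c * d) = box a c * box b d"
  by (simp add: box_def emb1_mult emb2_mult algebra_simps)
lemma box_single [simp]: "box (sng a u) (sng b v) = sng (a, b) (u * v)"
  by (simp add: box_def emb1_def emb2_def mult_single mult.assoc[symmetric]
      single0_central[of u "sng (a,0) 1"])
lemma box_one_one [simp]: "box 1 1 = 1"
  by (metis box_single mult_1 single_one zero_prod_def)

lemma box_lookup: "lkp (box x y) (c, d) = lkp x c * lkp y d"
proof (induction x rule: pm_induct)
  case zero then show ?case by simp
next
  case (single_add a u x)
  have "lkp (box (sng a u) y) (c, d) = lkp (sng a u) c * lkp y d"
  proof (induction y rule: pm_induct)
    case zero then show ?case by simp
  next
    case (single_add b v y)
    then show ?case by (simp add: box_add_right lookup_add lookup_single when_def distrib_left)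
  qed
  with single_add show ?case by (simp add: box_add_left lookup_add distrib_right)
qed

lemma Dk_lookup: "lkp (Dk x) (c, d) = (if c = d then lkp x c else 0)"
proof (induction x rule: pm_induct)
  case zero then show ?case by simp
next
  case (single_add a u x)
  then show ?case by (auto simp: Dk_add lookup_add lookup_single when_def)
qed

lemma Dk_shift_lookup: "lkp (Dk x * sng (s, 0) 1) (c, d) = (if c = d + s then lkp x d else 0)"
proof (induction x rule: pm_induct)
  case zero then show ?case by simp
next
  case (single_add a u x)
  then show ?case by (auto simp: Dk_add distrib_right lookup_add lookup_single when_def mult_single)
qed

section \<open>Tensor functionals\<close>

definition Tf :: "('i gen list \<Rightarrow> 'k::comm_ring_1 kQ) \<Rightarrow> ('i gen list \<Rightarrow> 'k kQ) \<Rightarrow> ('i, 'k) ft \<Rightarrow> 'k kQ2" where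
  "Tf \<alpha> \<beta> = lext (\<lambda>uv. box (\<alpha> (fst uv)) (\<beta> (snd uv)))"

lemma Tf_single [simp]: "Tf \<alpha> \<beta> (sng (u, v) c) = sng 0 c * box (\<alpha> u) (\<beta> v)"
  by (simp add: Tf_def)

lemma Tf_one [simp]: "Tf \<alpha> \<beta> 1 = box (\<alpha> []) (\<beta> [])"
proof -
  have "(1::('i,'k::comm_ring_1) ft) = sng ([],[]) 1" by simp
  then show ?thesis by (subst (1) \<open>1 = _\<close>, simp only: Tf_single) simp
qed

lemma Tf_add: "Tf \<alpha> \<beta> (x + y) = Tf \<alpha> \<beta> x + Tf \<alpha> \<beta> y"
  by (simp add: Tf_def lext_add)

lemma box_scale_left: "box (sng 0 c * x) y = sng 0 c * box x y"
  by (simp add: box_def emb1_def lext_scale mult.assoc)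
lemma box_scale_right: "box x (sng 0 c * y) = sng 0 c * box x y"
  by (simp add: box_def emb2_def lext_scale mult.assoc mult.left_commute)

lemma box_sum_left: "box (\<Sum>i\<in>A. f i) y = (\<Sum>i\<in>A. box (f i) y)"
  by (induction A rule: infinite_finite_induct) (simp_all add: box_add_left)
lemma box_sum_right: "box x (\<Sum>i\<in>A. f i) = (\<Sum>i\<in>A. box x (f i))"
  by (induction A rule: infinite_finite_induct) (simp_all add: box_add_right)

lemma Tf_tensor: "Tf \<alpha> \<beta> (ft_tensor f g) = box (lext \<alpha> f) (lext \<beta> g)"
proof -
  have "Tf \<alpha> \<beta> (ft_tensor f g) = (\<Sum>u\<in>kys f. \<Sum>v\<in>kys g. sng 0 (lkp f u * lkp g v) * box (\<alpha> u) (\<beta> v))"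
    by (simp add: ft_tensor_def Tf_def lext_sum)
  also have "\<dots> = box (lext \<alpha> f) (lext \<beta> g)"
    apply (simp add: lext_def box_sum_left box_sum_right box_scale_left box_scale_right
        mult.assoc single0_mult[symmetric] sum_distrib_left)
    apply (subst sum.swap)
    apply (simp add: mult.left_commute)
    done
  finally show ?thesis .
qed

lemma Tf_killed:
  assumes h: "h \<in> ft_ideal R"
    and a: "\<And>r. r \<in> R \<Longrightarrow> lext \<alpha> r = 0" and b: "\<And>r. r \<in> R \<Longrightarrow> lext \<beta> r = 0"
  shows "Tf \<alpha> \<beta> h = 0"
  using h
proof (induction h rule: ft_ideal.induct)
  case zero then show ?case by (simp add: Tf_def)
next
  case (left r f) then show ?case by (simp add: Tf_tensor a)
next
  case (right r f) then show ?case by (simp add: Tf_tensor b)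
next
  case (add a b) then show ?case by (simp add: Tf_add)
qed

lemma Tf_mult:
  assumes "\<And>u v. \<alpha> (u @ v) = \<alpha> u * \<alpha> v" and "\<And>u v. \<beta> (u @ v) = \<beta> u * \<beta> v"
  shows "Tf \<alpha> \<beta> (A * B) = Tf \<alpha> \<beta> A * Tf \<alpha> \<beta> B"
  unfolding Tf_def by (rule lext_mult) (simp add: assms box_mult)

lemma Tf_mult_pm:
  assumes "\<And>u v. \<alpha> (u @ v) = \<alpha> u * \<alpha> v"
    and "\<And>u v. \<mu> (u @ v) = \<alpha> u * \<mu> v + \<mu> u * \<tau> v"
  shows "Tf \<alpha> \<mu> (A * B) = Tf \<alpha> \<alpha> A * Tf \<alpha> \<mu> B + Tf \<alpha> \<mu> A * Tf \<alpha> \<tau> B"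
  unfolding Tf_def by (rule lext_mult2) (simp add: assms box_mult box_add_right)

lemma Tf_mult_mp:
  assumes "\<And>u v. \<alpha> (u @ v) = \<alpha> u * \<alpha> v"
    and "\<And>u v. \<mu> (u @ v) = \<alpha> u * \<mu> v + \<mu> u * \<tau> v"
  shows "Tf \<mu> \<alpha> (A * B) = Tf \<alpha> \<alpha> A * Tf \<mu> \<alpha> B + Tf \<mu> \<alpha> A * Tf \<tau> \<alpha> B"
  unfolding Tf_def by (rule lext_mult2) (simp add: assms box_mult box_add_left)

lemma Tf_lext_compose: "Tf \<alpha> \<beta> (lext P f) = lext (\<lambda>w. Tf \<alpha> \<beta> (P w)) f"
  by (simp add: Tf_def lext_compose)

lemma Dk_lext: "Dk (lext P f) = lext (\<lambda>w. Dk (P w)) f"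
  by (simp add: Dk_def lext_compose)

lemma lext_mult_right: "lext (\<lambda>w. P w * c) f = lext P f * c"
  by (simp add: lext_def sum_distrib_right mult.assoc)


lemma Tpp_gen: "Tf (piw G) (piw G) (delta_gen p g) = Dk (pigen G g :: 'k::comm_ring_1 kQ)"
  by (cases g) (simp_all add: Tf_add)

lemma Tpt_gen: "Tf (piw G) (tw G p \<chi> j) (delta_gen p g) = Dk (tgen G p \<chi> j g :: 'k::field kQ)"
  by (cases g) (simp_all add: Tf_add)

lemma Ttp_gen: "Tf (tw G p \<chi> j) (piw G) (delta_gen p g) = Dk (tgen G p \<chi> j g :: 'k::field kQ)"
  by (cases g) (simp_all add: Tf_add)

lemma Tpm_gen: "1 / of_nat (p j) \<in> G \<Longrightarrow>
  Tf (piw G) (muw G p \<chi> j) (delta_gen p g) = Dk (mugen j g :: 'k::field kQ) * sng (1 / of_nat (p j), 0) 1"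
  by (cases g) (auto simp: Tf_add box_single[of _ 1 0 1, simplified])

lemma Tmp_gen: "Tf (muw G p \<chi> j) (piw G) (delta_gen p g) = Dk (mugen j g :: 'k::field kQ)"
  by (cases g) (simp_all add: Tf_add)

lemma Tpp_word: "Tf (piw G) (piw G) (delta_word p w) = Dk (piw G w :: 'k::comm_ring_1 kQ)"
proof (induction w)
  case Nil then show ?case by simp
next
  case (Cons g w)
  then show ?case by (simp add: Tf_mult piw_append Tpp_gen Dk_mult)
qed

lemma Tpt_word: "Tf (piw G) (tw G p \<chi> j) (delta_word p w) = Dk (tw G p \<chi> j w :: 'k::field kQ)"
proof (induction w)
  case Nil then show ?case by simp
next
  case (Cons g w)
  then show ?case by (simp add: Tf_mult piw_append tw_append Tpt_gen Dk_mult)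
qed

lemma Ttp_word: "Tf (tw G p \<chi> j) (piw G) (delta_word p w) = Dk (tw G p \<chi> j w :: 'k::field kQ)"
proof (induction w)
  case Nil then show ?case by simp
next
  case (Cons g w)
  then show ?case by (simp add: Tf_mult piw_append tw_append Ttp_gen Dk_mult)
qed

lemma Tpm_word: "1 / of_nat (p j) \<in> G \<Longrightarrow>
  Tf (piw G) (muw G p \<chi> j) (delta_word p w) = Dk (muw G p \<chi> j w :: 'k::field kQ) * sng (1 / of_nat (p j), 0) 1"
proof (induction w)
  case Nil then show ?case by simp
next
  case (Cons g w)
  have "Tf (piw G) (muw G p \<chi> j) (delta_word p (g # w))
     = Tf (piw G) (piw G) (delta_gen p g) * Tf (piw G) (muw G p \<chi> j) (delta_word p w)
     + Tf (piw G) (muw G p \<chi> j) (delta_gen p g) * Tf (piw G) (tw G p \<chi> j) (delta_word p w)"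
    by (simp add: Tf_mult_pm[OF piw_append muw_append])
  also have "\<dots> = Dk (muw G p \<chi> j (g # w)) * sng (1 / of_nat (p j), 0) 1"
    using Cons by (simp add: Tpp_gen Tpm_gen Tpt_word Dk_mult Dk_add algebra_simps)
  finally show ?case .
qed

lemma Tmp_word: "Tf (muw G p \<chi> j) (piw G) (delta_word p w) = Dk (muw G p \<chi> j w :: 'k::field kQ)"
proof (induction w)
  case Nil then show ?case by simp
next
  case (Cons g w)
  have "Tf (muw G p \<chi> j) (piw G) (delta_word p (g # w))
     = Tf (piw G) (piw G) (delta_gen p g) * Tf (muw G p \<chi> j) (piw G) (delta_word p w)
     + Tf (muw G p \<chi> j) (piw G) (delta_gen p g) * Tf (tw G p \<chi> j) (piw G) (delta_word p w)"
    by (simp add: Tf_mult_mp[OF piw_append muw_append])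
  also have "\<dots> = Dk (muw G p \<chi> j (g # w))"
    using Cons by (simp add: Tpp_gen Tmp_gen Ttp_word Dk_mult Dk_add algebra_simps)
  finally show ?case .
qed

lemma Tpp_Delta: "Tf (piw G) (piw G) (B_Delta p f) = Dk (pim G f :: 'k::comm_ring_1 kQ)"
  by (simp add: B_Delta_eq Tf_lext_compose Tpp_word pim_def Dk_lext)
lemma Tpt_Delta: "Tf (piw G) (tw G p \<chi> j) (B_Delta p f) = Dk (taum G p \<chi> j f :: 'k::field kQ)"
  by (simp add: B_Delta_eq Tf_lext_compose Tpt_word taum_def Dk_lext)
lemma Tpm_Delta: "1 / of_nat (p j) \<in> G \<Longrightarrow>
  Tf (piw G) (muw G p \<chi> j) (B_Delta p f) = Dk (mum G p \<chi> j f :: 'k::field kQ) * sng (1 / of_nat (p j), 0) 1"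
  by (simp add: B_Delta_eq Tf_lext_compose Tpm_word mum_def Dk_lext lext_mult_right)
lemma Tmp_Delta: "Tf (muw G p \<chi> j) (piw G) (B_Delta p f) = Dk (mum G p \<chi> j f :: 'k::field kQ)"
  by (simp add: B_Delta_eq Tf_lext_compose Tmp_word mum_def Dk_lext)


lemma lookup_single0_mult: "lkp (sng 0 c * (y :: 'x::monoid_add \<Rightarrow>\<^sub>0 'k::comm_ring_1)) x = c * lkp y x"
proof (induction y rule: pm_induct)
  case zero then show ?case by simp
next
  case (single_add w a f)
  then show ?case by (simp add: distrib_left lookup_add mult_single lookup_single when_def)
qed

lemma lookup_lext: "lkp (lext Q \<nu>) x = (\<Sum>w\<in>kys \<nu>. lkp \<nu> w * lkp (Q w) x)"
  by (simp add: lext_def lookup_sum lookup_single0_mult)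

lemma lext_mult_left:
  fixes x :: "'x::monoid_add \<Rightarrow>\<^sub>0 'k::comm_ring_1"
  shows "x * lext P f = lext (\<lambda>w. x * P w) f"
proof -
  have e: "x * (sng 0 c * y) = sng 0 c * (x * y)" for c y
    by (simp only: mult.assoc[symmetric] single0_central[of c x])
  show ?thesis by (simp add: lext_def sum_distrib_left e)
qed

lemma lext_scale_fun: "lext (\<lambda>w. sng 0 c * P w) f = sng 0 c * lext P f"
  by (simp add: lext_mult_left)

lemma sum_lookup_delta:
  fixes \<nu> :: "'w \<Rightarrow>\<^sub>0 'k::comm_ring_1"
  shows "(\<Sum>w\<in>kys \<nu>. lkp \<nu> w * (if w = z then 1 else 0)) = lkp \<nu> z"
proof -
  have "(\<Sum>w\<in>kys \<nu>. lkp \<nu> w * (if w = z then 1 else 0)) = (\<Sum>w\<in>kys \<nu>. if w = z then lkp \<nu> w else 0)"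
    by (rule sum.cong) auto
  also have "\<dots> = lkp \<nu> z" by (simp add: sum.delta' in_keys_iff)
  finally show ?thesis .
qed

definition aug :: "'k::comm_ring_1 kQ \<Rightarrow> 'k" where "aug x = lkp (lext (\<lambda>_. 1 :: 'k kQ) x) 0"

lemma aug_single [simp]: "aug (sng b c) = c" by (simp add: aug_def)

lemma aug_eq: "aug x = (\<Sum>b\<in>kys x. lkp x b)"
  by (simp add: aug_def lookup_lext)

section \<open>Killing the y's\<close>

context
  fixes G :: "rat set" and I :: "'i set" and p :: "'i \<Rightarrow> nat" and \<chi> :: "rat \<Rightarrow> 'k::field"
  assumes D: "B_data G I p \<chi>"
begin

lemma rel_XY: "a \<in> G \<Longrightarrow> i \<in> I \<Longrightarrow>
  sng [GX a] 1 * sng [GY i] 1 - sng 0 (\<chi> (a / of_nat (p i))) * (sng [GY i] 1 * sng [GX a] 1) \<in> B_ideal G I p \<chi>"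
proof -
  assume a: "a \<in> G" and i: "i \<in> I"
  have "fa_mult (fa_X a) (fa_Y i) - fa_smult (\<chi> (a / of_nat (p i))) (fa_mult (fa_Y i) (fa_X a)) \<in> B_rels G I p \<chi>"
    unfolding B_rels_def by (rule UnI1, rule UnI1, rule UnI1, rule UnI1, rule UnI2) (use a i in blast)
  then show ?thesis unfolding B_ideal_def fa_mult_eq fa_smult_eq fa_X_def fa_Y_def by (rule fa_ideal.gen)
qed

lemma rel_XX: "a \<in> G \<Longrightarrow> b \<in> G \<Longrightarrow>
  sng [GX a] 1 * sng [GX b] 1 - sng [GX (a + b)] 1 \<in> B_ideal G I p \<chi>"
proof -
  assume a: "a \<in> G" and b: "b \<in> G"
  have "fa_mult (fa_X a) (fa_X b) - fa_X (a + b) \<in> B_rels G I p \<chi>"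
    unfolding B_rels_def by (rule UnI1, rule UnI1, rule UnI1, rule UnI1, rule UnI1, rule UnI2) (use a b in blast)
  then show ?thesis unfolding B_ideal_def fa_mult_eq fa_smult_eq fa_X_def fa_Y_def by (rule fa_ideal.gen)
qed

lemma rel_X0: "sng [GX 0] 1 - 1 \<in> B_ideal G I p \<chi>"
proof -
  have "fa_X 0 - fa_one \<in> B_rels G I p \<chi>"
    unfolding B_rels_def by (rule UnI1, rule UnI1, rule UnI1, rule UnI1, rule UnI1, rule UnI1) blast
  then show ?thesis unfolding B_ideal_def fa_one_eq fa_X_def by (rule fa_ideal.gen)
qed

lemma rel_YY: "i \<in> I \<Longrightarrow> k \<in> I \<Longrightarrow>
  sng (replicate (p i) (GY i)) 1 - sng (replicate (p k) (GY k)) 1 \<in> B_ideal G I p \<chi>"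
proof -
  assume i: "i \<in> I" and k: "k \<in> I"
  have "sng (replicate (p i) (GY i)) 1 - sng (replicate (p k) (GY k)) 1 \<in> B_rels G I p \<chi>"
    unfolding B_rels_def by (rule UnI1, rule UnI1, rule UnI2) (use i k in blast)
  then show ?thesis unfolding B_ideal_def by (rule fa_ideal.gen)
qed

lemma rel_Yc: "i \<in> I \<Longrightarrow> k \<in> I \<Longrightarrow>
  sng [GY i] 1 * sng [GY k] 1 - sng [GY k] 1 * sng [GY i] 1 \<in> B_ideal G I p \<chi>"
proof -
  assume i: "i \<in> I" and k: "k \<in> I"
  have "fa_mult (fa_Y i) (fa_Y k) - fa_mult (fa_Y k) (fa_Y i) \<in> B_rels G I p \<chi>"
    unfolding B_rels_def by (rule UnI1, rule UnI1, rule UnI1, rule UnI2) (use i k in blast)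
  then show ?thesis unfolding B_ideal_def fa_mult_eq fa_Y_def by (rule fa_ideal.gen)
qed

lemma rel_Xbad: "a \<notin> G \<Longrightarrow> sng [GX a] 1 \<in> B_ideal G I p \<chi>"
proof -
  assume a: "a \<notin> G"
  have "fa_X a \<in> B_rels G I p \<chi>"
    unfolding B_rels_def by (rule UnI1, rule UnI2) (use a in blast)
  then show ?thesis unfolding B_ideal_def fa_X_def by (rule fa_ideal.gen)
qed

lemma rel_Ybad: "i \<notin> I \<Longrightarrow> sng [GY i] 1 \<in> B_ideal G I p \<chi>"
proof -
  assume i: "i \<notin> I"
  have "fa_Y i \<in> B_rels G I p \<chi>"
    unfolding B_rels_def by (rule UnI2) (use i in blast)
  then show ?thesis unfolding B_ideal_def fa_Y_def by (rule fa_ideal.gen)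
qed

lemma kill_Y:
  fixes \<rho> :: "('i, 'k) fa \<Rightarrow> 'k kQ"
  assumes i: "i \<in> I"
    and add: "\<And>x y. \<rho> (x + y) = \<rho> x + \<rho> y"
    and sc: "\<And>c x. \<rho> (sng 0 c * x) = sng 0 c * \<rho> x"
    and mult: "\<And>x y. \<rho> (x * y) = \<rho> x * \<rho> y"
    and one: "\<rho> 1 = 1"
    and kill: "\<And>r. r \<in> B_ideal G I p \<chi> \<Longrightarrow> \<rho> r = 0"
  shows "\<rho> (sng [GY i] 1) = 0"
proof -
  have diff: "\<rho> (x - y) = \<rho> x - \<rho> y" for x y
    using add[of "x - y" y] by (simp add: algebra_simps)
  let ?a = "1 / of_nat (p i) :: rat"
  have aG: "?a \<in> G" using D_inv[OF D i] .
  have naG: "- ?a \<in> G" using D_neg[OF D aG] .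
  let ?c = "\<chi> (?a / of_nat (p i))"
  let ?X = "\<rho> (sng [GX ?a] 1)" and ?Xn = "\<rho> (sng [GX (- ?a)] 1)" and ?Y = "\<rho> (sng [GY i] 1)"
  have "\<rho> (sng [GX ?a] 1 * sng [GY i] 1 - sng 0 ?c * (sng [GY i] 1 * sng [GX ?a] 1)) = 0"
    by (rule kill[OF rel_XY[OF aG i]])
  then have "\<rho> (sng [GX ?a] 1 * sng [GY i] 1) = \<rho> (sng 0 ?c * (sng [GY i] 1 * sng [GX ?a] 1))"
    by (simp only: diff right_minus_eq)
  then have e1: "?X * ?Y = sng 0 ?c * (?Y * ?X)" by (subst (asm) sc, simp only: mult)
  have "\<rho> (sng [GX ?a] 1 * sng [GX (- ?a)] 1 - sng [GX (?a + - ?a)] 1) = 0"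
    by (rule kill[OF rel_XX[OF aG naG]])
  moreover have "\<rho> (sng [GX 0] 1 - 1) = 0" by (rule kill[OF rel_X0])
  ultimately have e2: "?X * ?Xn = 1" by (simp only: diff mult one right_minus_eq) simp
  have "(1 - sng 0 ?c) * ?Y = (1 - sng 0 ?c) * ?Y * (?X * ?Xn)" by (simp add: e2)
  also have "\<dots> = (?X * ?Y - sng 0 ?c * (?Y * ?X)) * ?Xn" by (simp add: algebra_simps)
  also have "\<dots> = 0" by (simp add: e1)
  finally have e3: "sng 0 (1 - ?c) * ?Y = 0" by (simp add: single_diff)
  have "?c \<noteq> 1" using D_chi_ne1[OF D i] .
  then have inv: "sng 0 (inverse (1 - ?c)) * sng 0 (1 - ?c) = (1 :: 'k kQ)"
    by (simp add: mult_single)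
  have "?Y = (sng 0 (inverse (1 - ?c)) * sng 0 (1 - ?c)) * ?Y" by (simp only: inv mult_1_left)
  also have "\<dots> = sng 0 (inverse (1 - ?c)) * (sng 0 (1 - ?c) * ?Y)" by (rule mult.assoc)
  also have "\<dots> = 0" by (simp only: e3 mult_zero_right)
  finally show ?thesis .
qed

lemma piw_shape:
  assumes j: "j \<in> I"
  shows "(piw G w = (0::'k kQ) \<and> tw G p \<chi> j w = 0) \<or>
    (\<exists>s\<in>G. piw G w = (sng s 1 :: 'k kQ) \<and> tw G p \<chi> j w = sng s (inverse (\<chi> (s / of_nat (p j)))))"
proof (induction w)
  case Nil
  have "(1::'k kQ) = sng 0 1" by simp
  then show ?case using D_zero[OF D] D_chi0[OF D] by (intro disjI2 bexI[of _ 0]) simp_all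
next
  case (Cons g w)
  show ?case
  proof (cases g)
    case (GX a)
    show ?thesis
    proof (cases "a \<in> G")
      case False then show ?thesis using GX by simp
    next
      case True
      from Cons show ?thesis
      proof
        assume "piw G w = (0::'k kQ) \<and> tw G p \<chi> j w = 0" then show ?thesis by simp
      next
        assume "\<exists>s\<in>G. piw G w = (sng s 1 :: 'k kQ) \<and> tw G p \<chi> j w = sng s (inverse (\<chi> (s / of_nat (p j))))"
        then obtain s where s: "s \<in> G" "piw G w = (sng s 1 :: 'k kQ)" "tw G p \<chi> j w = sng s (inverse (\<chi> (s / of_nat (p j))))"
          by blast
        have as: "a + s \<in> G" using D_add[OF D True s(1)] .
        have "\<chi> ((a + s) / of_nat (p j)) = \<chi> (a / of_nat (p j)) * \<chi> (s / of_nat (p j))"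
          using D_chi_div_add[OF D j True s(1)] .
        then show ?thesis using GX True s as
          by (intro disjI2 bexI[of _ "a + s"]) (simp_all add: mult_single)
      qed
    qed
  next
    case (GY i) then show ?thesis by simp
  qed
qed

lemma keys_piw: "kys (piw G w :: 'k kQ) \<subseteq> G"
proof (induction w)
  case Nil then show ?case using D_zero[OF D] by (simp add: one_poly_mapping_def[symmetric] flip: single_one)
next
  case (Cons g w)
  show ?case
  proof (cases g)
    case (GX a)
    show ?thesis
    proof (cases "a \<in> G")
      case False then show ?thesis using GX by simp
    next
      case True
      have "kys (sng a 1 * piw G w :: 'k kQ) \<subseteq> {a + s | s. s \<in> kys (piw G w :: 'k kQ)}"
        by (rule order_trans[OF keys_mult]) auto
      also have "\<dots> \<subseteq> G" using Cons True D_add[OF D] by blast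
      finally show ?thesis using GX True by simp
    qed
  next
    case (GY i) then show ?thesis by simp
  qed
qed

lemma keys_lext_subset: "(\<And>w. w \<in> kys f \<Longrightarrow> kys (P w) \<subseteq> S) \<Longrightarrow> kys (lext P f) \<subseteq> S"
proof -
  assume h: "\<And>w. w \<in> kys f \<Longrightarrow> kys (P w) \<subseteq> S"
  have "kys (lext P f) \<subseteq> (\<Union>w\<in>kys f. kys (sng 0 (lkp f w) * P w))"
    unfolding lext_def by (rule keys_sum)
  also have "\<dots> \<subseteq> S"
  proof (intro UN_least)
    fix w assume w: "w \<in> kys f"
    show "kys (sng 0 (lkp f w) * P w) \<subseteq> S"
      by (rule order_trans[OF keys_mult]) (use h[OF w] in auto)
  qed
  finally show ?thesis .
qed

lemma keys_pim: "kys (pim G f :: 'k kQ) \<subseteq> G"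
  unfolding pim_def by (rule keys_lext_subset) (rule keys_piw)

definition twist :: "'i \<Rightarrow> 'k kQ \<Rightarrow> 'k kQ" where
  "twist j = lext (\<lambda>b. sng b (inverse (\<chi> (b / of_nat (p j)))))"

lemma twist_single: "twist j (sng b c) = sng b (c * inverse (\<chi> (b / of_nat (p j))))"
  by (simp add: twist_def mult_single)

lemma taum_twist: assumes j: "j \<in> I" shows "taum G p \<chi> j f = twist j (pim G f)"
proof -
  have h: "tw G p \<chi> j w = twist j (piw G w)" for w
    using piw_shape[OF j, of w] by (auto simp: twist_def)
  have "lext (tw G p \<chi> j) f = lext (\<lambda>w. twist j (piw G w)) f"
    by (rule lext_cong) (rule h)
  then show ?thesis by (simp add: taum_def pim_def twist_def lext_compose)
qed


lemma B_eps_aug: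
  fixes f :: "('i,'k) fa"
  shows "B_eps G f = aug (pim G f)"
proof -
  have m: "lext (\<lambda>_. 1) (x * y) = lext (\<lambda>_. 1) x * (lext (\<lambda>_. 1) y :: 'k kQ)" for x y :: "'k kQ"
    by (rule lext_mult) simp
  have w: "lext (\<lambda>_. 1) (piw G w) = (sng 0 (epsw G w) :: 'k kQ)" for w :: "'i gen list"
  proof (induction w)
    case Nil then show ?case by (simp add: epsw_def one_poly_mapping_def[symmetric] flip: single_one)
  next
    case (Cons g w)
    then show ?case by (cases g) (simp_all add: m epsw_def mult_single)
  qed
  have "lext (\<lambda>w. sng 0 (epsw G w)) f = lext (\<lambda>w. lext (\<lambda>_. 1 :: 'k kQ) (piw G w)) f"
    by (rule lext_cong) (simp add: w)
  then show ?thesis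
    by (simp add: B_eps_eq aug_def pim_def lext_compose)
qed

end


fun nfw :: "rat \<times> 'i option \<Rightarrow> ('i,'k::comm_ring_1) fa" where
  "nfw (b, None) = sng [GX b] 1"
| "nfw (b, Some j) = sng [GX b, GY j] 1"

fun isY :: "'i gen \<Rightarrow> bool" where
  "isY (GX a) = False" | "isY (GY i) = True"

definition countY :: "'i gen list \<Rightarrow> nat" where "countY w = length (filter isY w)"

lemma countY_simps [simp]: "countY [] = 0" "countY (GX a # w) = countY w" "countY (GY i # w) = Suc (countY w)"
  "countY (u @ v) = countY u + countY v"
  by (simp_all add: countY_def)

definition J2 :: "('i,'k::comm_ring_1) fa set" where "J2 = {t. \<forall>w\<in>kys t. 2 \<le> countY w}"

lemma keys_add_sub: "kys (a + b) \<subseteq> kys a \<union> kys b"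
  by (auto simp: in_keys_iff lookup_add)

lemma J2_zero: "0 \<in> J2" by (simp add: J2_def)
lemma J2_add: "a \<in> J2 \<Longrightarrow> b \<in> J2 \<Longrightarrow> a + b \<in> J2"
proof -
  assume a: "a \<in> J2" and b: "b \<in> J2"
  show ?thesis
  proof (unfold J2_def, intro CollectI ballI)
    fix w assume "w \<in> kys (a + b)"
    then have "w \<in> kys a \<or> w \<in> kys b" using keys_add_sub by fast
    then show "2 \<le> countY w" using a b unfolding J2_def by blast
  qed
qed
lemma J2_mult_left: "t \<in> J2 \<Longrightarrow> x * t \<in> J2"
proof -
  assume t: "t \<in> J2"
  show ?thesis
  proof (unfold J2_def, intro CollectI ballI)
    fix w assume "w \<in> kys (x * t)"
    then obtain u v where uv: "w = u @ v" "v \<in> kys t" using keys_mult[of x t] by auto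
    have "2 \<le> countY v" using t uv(2) unfolding J2_def by blast
    then show "2 \<le> countY w" using uv by simp
  qed
qed
lemma J2_word: "2 \<le> countY w \<Longrightarrow> sng w c \<in> J2"
  by (simp add: J2_def)
lemma J2_sum: "(\<And>i. i \<in> A \<Longrightarrow> g i \<in> J2) \<Longrightarrow> (\<Sum>i\<in>A. g i) \<in> J2"
  by (induction A rule: infinite_finite_induct) (simp_all add: J2_zero J2_add)

lemma countY_pos: "1 \<le> countY w \<Longrightarrow> \<exists>i. GY i \<in> set w"
proof (induction w)
  case Nil then show ?case by simp
next
  case (Cons g w)
  then show ?case by (cases g) auto
qed

lemma piw_Y': "GY i \<in> set w \<Longrightarrow> piw G w = 0"
  by (induction w) auto
lemma tw_Y': "GY i \<in> set w \<Longrightarrow> tw G p \<chi> j w = 0"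
  by (induction w) auto

lemma muw_count2: "2 \<le> countY w \<Longrightarrow> muw G p \<chi> j w = 0"
proof (induction w)
  case Nil then show ?case by simp
next
  case (Cons g w)
  show ?case
  proof (cases g)
    case (GX a) with Cons show ?thesis by simp
  next
    case (GY i)
    then have "1 \<le> countY w" using Cons.prems by simp
    then obtain k where "GY k \<in> set w" using countY_pos by blast
    then show ?thesis using GY by (simp add: tw_Y')
  qed
qed

lemma lext_zero_fun: "(\<And>w. w \<in> kys f \<Longrightarrow> P w = 0) \<Longrightarrow> lext P f = 0"
  by (simp add: lext_def)

lemma pim_J2: "t \<in> J2 \<Longrightarrow> pim G t = 0"
  unfolding pim_def
proof (rule lext_zero_fun)
  fix w assume "t \<in> J2" "w \<in> kys t"
  then have "1 \<le> countY w" unfolding J2_def by fastforce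
  then obtain i where "GY i \<in> set w" using countY_pos by blast
  then show "piw G w = 0" by (rule piw_Y')
qed

lemma mum_J2: "t \<in> J2 \<Longrightarrow> mum G p \<chi> j t = 0"
  unfolding mum_def J2_def
  by (rule lext_zero_fun) (simp add: muw_count2)

lemma pim_nfw: "fst w \<in> G \<Longrightarrow> lkp (lext (piw G) (nfw w) :: 'k::comm_ring_1 kQ) b = (if w = (b, None) then 1 else 0)"
  by (cases w, rename_tac b' oo, case_tac oo) (auto simp: lookup_single when_def)

lemma mum_nfw: "fst w \<in> G \<Longrightarrow> lkp (lext (muw G p \<chi> j) (nfw w) :: 'k::field kQ) b = (if w = (b, Some j) then 1 else 0)"
  by (cases w, rename_tac b' oo, case_tac oo) (auto simp: lookup_single when_def)

context
  fixes G :: "rat set" and I :: "'i set" and p :: "'i \<Rightarrow> nat" and \<chi> :: "rat \<Rightarrow> 'k::field"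
  assumes D: "B_data G I p \<chi>"
begin

definition validnf :: "(rat \<times> 'i option) \<Rightarrow> bool" where
  "validnf bo \<longleftrightarrow> fst bo \<in> G \<and> (\<forall>j. snd bo = Some j \<longrightarrow> j \<in> I)"

definition NFable :: "('i,'k) fa \<Rightarrow> bool" where
  "NFable f \<longleftrightarrow> (\<exists>\<nu> t r. (\<forall>bo\<in>kys \<nu>. validnf bo) \<and> t \<in> J2 \<and> r \<in> B_ideal G I p \<chi> \<and>
       f = lext nfw \<nu> + t + r)"

lemma NF_zero: "NFable 0"
  unfolding NFable_def
  by (rule exI[of _ 0], rule exI[of _ 0], rule exI[of _ 0]) (simp add: J2_zero B_ideal_def fa_ideal.zero)

lemma NF_add: "NFable f \<Longrightarrow> NFable g \<Longrightarrow> NFable (f + g)"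
proof -
  assume f: "NFable f" and g: "NFable g"
  obtain \<nu> t r where a: "\<forall>bo\<in>kys \<nu>. validnf bo" "t \<in> J2" "r \<in> B_ideal G I p \<chi>" "f = lext nfw \<nu> + t + r"
    using f unfolding NFable_def by blast
  obtain \<nu>' t' r' where b: "\<forall>bo\<in>kys \<nu>'. validnf bo" "t' \<in> J2" "r' \<in> B_ideal G I p \<chi>" "g = lext nfw \<nu>' + t' + r'"
    using g unfolding NFable_def by blast
  have v: "\<forall>bo\<in>kys (\<nu> + \<nu>'). validnf bo"
  proof
    fix bo assume "bo \<in> kys (\<nu> + \<nu>')"
    then have "bo \<in> kys \<nu> \<or> bo \<in> kys \<nu>'" using keys_add_sub by fast
    then show "validnf bo" using a(1) b(1) by blast
  qed
  have "t + t' \<in> J2" using a(2) b(2) by (rule J2_add)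
  moreover have "r + r' \<in> B_ideal G I p \<chi>" using a(3) b(3) unfolding B_ideal_def by (rule fa_ideal.add)
  moreover have "f + g = lext nfw (\<nu> + \<nu>') + (t + t') + (r + r')" using a(4) b(4) by (simp add: lext_add algebra_simps)
  ultimately show ?thesis unfolding NFable_def using v by blast
qed

lemma NF_ideal: "NFable f \<Longrightarrow> r' \<in> B_ideal G I p \<chi> \<Longrightarrow> NFable (f + r')"
proof -
  assume "NFable f" and r': "r' \<in> B_ideal G I p \<chi>"
  then obtain \<nu> t r where a: "\<forall>bo\<in>kys \<nu>. validnf bo" "t \<in> J2" "r \<in> B_ideal G I p \<chi>" "f = lext nfw \<nu> + t + r"
    unfolding NFable_def by blast
  show ?thesis unfolding NFable_def
    by (rule exI[of _ \<nu>], rule exI[of _ t], rule exI[of _ "r + r'"])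
      (use a r' in \<open>simp add: B_ideal_def fa_ideal.add algebra_simps\<close>)
qed

lemma NF_J2: "NFable f \<Longrightarrow> t' \<in> J2 \<Longrightarrow> NFable (f + t')"
proof -
  assume "NFable f" and t': "t' \<in> J2"
  then obtain \<nu> t r where a: "\<forall>bo\<in>kys \<nu>. validnf bo" "t \<in> J2" "r \<in> B_ideal G I p \<chi>" "f = lext nfw \<nu> + t + r"
    unfolding NFable_def by blast
  show ?thesis unfolding NFable_def
    by (rule exI[of _ \<nu>], rule exI[of _ "t + t'"], rule exI[of _ r])
      (use a t' in \<open>simp add: J2_add algebra_simps\<close>)
qed

lemma NF_sum0: "(\<And>i. i \<in> A \<Longrightarrow> NFable (g i)) \<Longrightarrow> NFable (\<Sum>i\<in>A. g i)"
  by (induction A rule: infinite_finite_induct) (simp_all add: NF_zero NF_add)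

lemma NF_nf: "validnf bo \<Longrightarrow> NFable (sng 0 c * nfw bo)"
  unfolding NFable_def
  by (rule exI[of _ "sng bo c"], rule exI[of _ 0], rule exI[of _ 0])
     (simp add: J2_zero B_ideal_def fa_ideal.zero)

lemma NF_scale: "NFable f \<Longrightarrow> NFable (sng 0 c * f)"
proof -
  assume "NFable f"
  then obtain \<nu> t r where a: "\<forall>bo\<in>kys \<nu>. validnf bo" "t \<in> J2" "r \<in> B_ideal G I p \<chi>" "f = lext nfw \<nu> + t + r"
    unfolding NFable_def by blast
  have e: "sng 0 c * lext nfw \<nu> = (\<Sum>w\<in>kys \<nu>. sng 0 (c * lkp \<nu> w) * nfw w)"
    by (simp add: lext_def sum_distrib_left mult.assoc[symmetric] single0_mult)
  have "NFable (sng 0 c * lext nfw \<nu>)"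
    unfolding e by (rule NF_sum0) (use a(1) NF_nf in blast)
  then have "NFable (sng 0 c * lext nfw \<nu> + sng 0 c * t)"
    by (rule NF_J2) (rule J2_mult_left[OF a(2)])
  then have "NFable (sng 0 c * lext nfw \<nu> + sng 0 c * t + sng 0 c * r)"
    by (rule NF_ideal) (use a(3) in \<open>simp add: B_ideal_def fa_ideal_mult_left\<close>)
  then show ?thesis by (simp add: a(4) distrib_left)
qed

lemma NF_sum: "(\<And>i. i \<in> A \<Longrightarrow> NFable (g i)) \<Longrightarrow> NFable (\<Sum>i\<in>A. g i)"
  by (induction A rule: infinite_finite_induct) (simp_all add: NF_zero NF_add)

lemma NF_lext: "(\<And>w. w \<in> kys f \<Longrightarrow> NFable (P w)) \<Longrightarrow> NFable (lext P f)"
  unfolding lext_def by (rule NF_sum) (simp add: NF_scale)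

lemma NF_of_ideal: "r \<in> B_ideal G I p \<chi> \<Longrightarrow> NFable r"
  using NF_ideal[OF NF_zero] by simp

lemma NF_diff_ideal: "NFable f \<Longrightarrow> f - g \<in> B_ideal G I p \<chi> \<Longrightarrow> NFable g"
proof -
  assume f: "NFable f" and fg: "f - g \<in> B_ideal G I p \<chi>"
  have "- (f - g) \<in> B_ideal G I p \<chi>" using fg unfolding B_ideal_def by (rule fa_ideal_uminus)
  then have "g - f \<in> B_ideal G I p \<chi>" by simp
  then have "NFable (f + (g - f))" by (rule NF_ideal[OF f])
  then show ?thesis by simp
qed

lemma NF_by: "NFable f \<Longrightarrow> g - f \<in> B_ideal G I p \<chi> \<Longrightarrow> NFable g"
  using NF_ideal[of f "g - f"] by simp

lemma NF_gen_nf: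
  assumes v: "validnf bo"
  shows "NFable (sng [g] 1 * nfw bo)"
proof -
  obtain b oo where bo: "bo = (b, oo)" by fastforce
  have bG: "b \<in> G" using v bo by (simp add: validnf_def)
  show ?thesis
  proof (cases g)
    case (GX a)
    show ?thesis
    proof (cases "a \<in> G")
      case False
      have "sng [g] 1 * nfw bo \<in> B_ideal G I p \<chi>"
        using rel_Xbad[OF D False] GX unfolding B_ideal_def by (simp add: fa_ideal_mult_right)
      then show ?thesis by (rule NF_of_ideal)
    next
      case True
      have ab: "a + b \<in> G" using D_add[OF D True bG] .
      have rel: "sng [GX a] 1 * sng [GX b] 1 - sng [GX (a + b)] 1 \<in> B_ideal G I p \<chi>"
        by (rule rel_XX[OF D True bG])
      show ?thesis
      proof (cases oo)
        case None
        have "NFable (sng 0 1 * nfw (a + b, None))" by (rule NF_nf) (simp add: validnf_def ab)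
        moreover have "sng [g] 1 * nfw bo - sng 0 1 * nfw (a + b, None) = sng [GX a] 1 * sng [GX b] 1 - sng [GX (a + b)] 1"
          using GX None bo by simp
        ultimately show ?thesis using rel by (metis NF_by)
      next
        case (Some j)
        have j: "j \<in> I" using v bo Some by (simp add: validnf_def)
        have "NFable (sng 0 1 * nfw (a + b, Some j))" by (rule NF_nf) (simp add: validnf_def ab j)
        moreover have "(sng [GX a] 1 * sng [GX b] 1 - sng [GX (a + b)] 1) * sng [GY j] 1 \<in> B_ideal G I p \<chi>"
          using rel unfolding B_ideal_def by (rule fa_ideal_mult_right)
        moreover have "sng [g] 1 * nfw bo - sng 0 1 * nfw (a + b, Some j)
            = (sng [GX a] 1 * sng [GX b] 1 - sng [GX (a + b)] 1) * sng [GY j] 1"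
          using GX Some bo by (simp add: mult_single left_diff_distrib)
        ultimately show ?thesis by (metis NF_by)
      qed
    qed
  next
    case (GY i)
    show ?thesis
    proof (cases "i \<in> I")
      case False
      have "sng [g] 1 * nfw bo \<in> B_ideal G I p \<chi>"
        using rel_Ybad[OF D False] GY unfolding B_ideal_def by (simp add: fa_ideal_mult_right)
      then show ?thesis by (rule NF_of_ideal)
    next
      case True
      show ?thesis
      proof (cases oo)
        case None
        let ?c = "\<chi> (b / of_nat (p i))"
        have nz: "?c \<noteq> 0" using D_nz[OF D GM_mem[OF True bG]] .
        have rel: "sng [GX b] 1 * sng [GY i] 1 - sng 0 ?c * (sng [GY i] 1 * sng [GX b] 1) \<in> B_ideal G I p \<chi>"
          by (rule rel_XY[OF D bG True])
        then have "sng 0 (- inverse ?c) * (sng [GX b] 1 * sng [GY i] 1 - sng 0 ?c * (sng [GY i] 1 * sng [GX b] 1))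
            \<in> B_ideal G I p \<chi>"
          unfolding B_ideal_def by (rule fa_ideal_mult_left)
        moreover have "NFable (sng 0 (inverse ?c) * nfw (b, Some i))" by (rule NF_nf) (simp add: validnf_def bG True)
        moreover have "sng [g] 1 * nfw bo - sng 0 (inverse ?c) * nfw (b, Some i)
           = sng 0 (- inverse ?c) * (sng [GX b] 1 * sng [GY i] 1 - sng 0 ?c * (sng [GY i] 1 * sng [GX b] 1))"
          using GY None bo nz by (simp add: mult_single right_diff_distrib single_uminus)
        ultimately show ?thesis by (metis NF_by)
      next
        case (Some j)
        have "sng [g] 1 * nfw bo \<in> J2" using GY Some bo by (simp add: mult_single J2_word)
        then show ?thesis using NF_J2[OF NF_zero] by simp
      qed
    qed
  qed
qed

lemma NF_word: "NFable (sng w 1)"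
proof (induction w)
  case Nil
  have "NFable (sng 0 1 * nfw (0, None))" by (rule NF_nf) (simp add: validnf_def D_zero[OF D])
  then show ?case
    by (rule NF_diff_ideal) (use rel_X0[OF D] in simp)
next
  case (Cons g w)
  then obtain \<nu> t r where a: "\<forall>bo\<in>kys \<nu>. validnf bo" "t \<in> J2" "r \<in> B_ideal G I p \<chi>" "sng w 1 = lext nfw \<nu> + t + r"
    unfolding NFable_def by blast
  have e: "sng (g # w) 1 = sng [g] 1 * lext nfw \<nu> + sng [g] 1 * t + sng [g] 1 * r"
    by (simp add: mult_single flip: a(4) distrib_left)
  have "NFable (sng [g] 1 * lext nfw \<nu>)"
    unfolding lext_mult_left by (rule NF_lext) (use a(1) NF_gen_nf in blast)
  then have "NFable (sng [g] 1 * lext nfw \<nu> + sng [g] 1 * t)"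
    by (rule NF_J2) (rule J2_mult_left[OF a(2)])
  then have "NFable (sng [g] 1 * lext nfw \<nu> + sng [g] 1 * t + sng [g] 1 * r)"
    by (rule NF_ideal) (use a(3) in \<open>simp add: B_ideal_def fa_ideal_mult_left\<close>)
  then show ?case by (simp only: e)
qed

lemma NF_all: "NFable f"
proof (induction f rule: pm_induct)
  case zero then show ?case by (rule NF_zero)
next
  case (single_add w c f)
  have "NFable (sng 0 c * sng w 1)" by (rule NF_scale[OF NF_word])
  then show ?case using NF_add single_add by (simp add: mult_single)
qed

lemma NF_kill:
  assumes p0: "pim G f = 0" and m0: "\<And>k. k \<in> I \<Longrightarrow> mum G p \<chi> k f = 0"
  shows "\<exists>t r. t \<in> J2 \<and> r \<in> B_ideal G I p \<chi> \<and> f = t + r"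
proof -
  obtain \<nu> t r where a: "\<forall>bo\<in>kys \<nu>. validnf bo" "t \<in> J2" "r \<in> B_ideal G I p \<chi>" "f = lext nfw \<nu> + t + r"
    using NF_all[of f] unfolding NFable_def by blast
  have P: "pim G (lext nfw \<nu>) = 0"
    using p0 a(2,3) ideal_killed[OF D a(3)] D_two[OF D] pim_J2[OF a(2)]
    by (auto simp: a(4) pim_add)
  have M: "mum G p \<chi> k (lext nfw \<nu>) = 0" if k: "k \<in> I" for k
    using m0[OF k] ideal_killed[OF D a(3) k] mum_J2[OF a(2)] by (simp add: a(4) mum_add)
  have "\<nu> = 0"
  proof (rule poly_mapping_eqI)
    fix bo :: "rat \<times> 'i option"
    obtain b oo where bo: "bo = (b, oo)" by fastforce
    show "lkp \<nu> bo = lkp 0 bo"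
    proof (cases "bo \<in> kys \<nu>")
      case False then show ?thesis by (simp add: in_keys_iff)
    next
      case True
      then have v: "validnf bo" using a(1) by blast
      show ?thesis
      proof (cases oo)
        case None
        have "lkp (pim G (lext nfw \<nu>)) b = (\<Sum>w\<in>kys \<nu>. lkp \<nu> w * lkp (lext (piw G) (nfw w)) b)"
          unfolding pim_def lext_compose by (rule lookup_lext)
        also have "\<dots> = (\<Sum>w\<in>kys \<nu>. lkp \<nu> w * (if w = (b, None) then 1 else 0))"
          by (rule sum.cong[OF refl], subst pim_nfw) (use a(1) in \<open>auto simp: validnf_def\<close>)
        finally have "lkp (pim G (lext nfw \<nu>)) b = (\<Sum>w\<in>kys \<nu>. lkp \<nu> w * (if w = (b, None) then 1 else 0))" .
        then have "lkp \<nu> (b, None) = 0" using P by (simp add: sum_lookup_delta)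
        then show ?thesis using bo None by simp
      next
        case (Some j)
        have j: "j \<in> I" using v bo Some by (simp add: validnf_def)
        have "lkp (mum G p \<chi> j (lext nfw \<nu>)) b = (\<Sum>w\<in>kys \<nu>. lkp \<nu> w * lkp (lext (muw G p \<chi> j) (nfw w)) b)"
          unfolding mum_def lext_compose by (rule lookup_lext)
        also have "\<dots> = (\<Sum>w\<in>kys \<nu>. lkp \<nu> w * (if w = (b, Some j) then 1 else 0))"
          by (rule sum.cong[OF refl], subst mum_nfw) (use a(1) in \<open>auto simp: validnf_def\<close>)
        finally have "lkp (mum G p \<chi> j (lext nfw \<nu>)) b = (\<Sum>w\<in>kys \<nu>. lkp \<nu> w * (if w = (b, Some j) then 1 else 0))" .
        then have "lkp \<nu> (b, Some j) = 0" using M[OF j] by (simp add: sum_lookup_delta)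
        then show ?thesis using bo Some by simp
      qed
    qed
  qed
  then show ?thesis using a by auto
qed

end


lemma pim_scale: "pim G (sng 0 c * f) = sng 0 c * pim G f" by (simp add: pim_def lext_scale)
lemma taum_scale: "taum G p \<chi> j (sng 0 c * f) = sng 0 c * taum G p \<chi> j f" by (simp add: taum_def lext_scale)
lemma mum_scale: "mum G p \<chi> j (sng 0 c * f) = sng 0 c * mum G p \<chi> j f" by (simp add: mum_def lext_scale)

lemma grouplike_kQ:
  fixes \<theta> :: "'k::field kQ"
  assumes bx: "box \<theta> \<theta> = Dk \<theta>" and au: "aug \<theta> = 1"
  shows "\<exists>b. \<theta> = sng b 1"
proof -
  have kne: "kys \<theta> \<noteq> {}" using au by (auto simp: aug_eq)
  then obtain b where b: "b \<in> kys \<theta>" by blast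
  have e: "lkp \<theta> c * lkp \<theta> d = (if c = d then lkp \<theta> c else 0)" for c d
    using arg_cong[OF bx, of "\<lambda>x. lkp x (c, d)"] by (simp add: box_lookup Dk_lookup)
  have b1: "lkp \<theta> b = 1"
    using e[of b b] b by (simp add: in_keys_iff)
  have "\<theta> = sng b 1"
  proof (rule poly_mapping_eqI)
    fix d show "lkp \<theta> d = lkp (sng b 1) d"
    proof (cases "d = b")
      case True then show ?thesis using b1 by simp
    next
      case False
      then have "lkp \<theta> b * lkp \<theta> d = 0" using e[of b d] by simp
      then show ?thesis using b1 False by (simp add: lookup_single when_def)
    qed
  qed
  then show ?thesis by blast
qed

lemma ft_map_single: "ft_map \<phi> (sng (u, v) c) = sng 0 c * ft_tensor (\<phi> (sng u 1)) (\<phi> (sng v 1))"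
  by (simp add: ft_map_eq)

lemma ft_map_add: "ft_map \<phi> (x + y) = ft_map \<phi> x + ft_map \<phi> y"
  by (simp add: ft_map_eq lext_add)

lemma Delta_X: "B_Delta p (sng [GX a] 1 :: ('i,'k::comm_ring_1) fa) = sng ([GX a], [GX a]) 1"
  by (simp add: B_Delta_eq)

lemma Delta_Y: "B_Delta p (sng [GY i] 1 :: ('i,'k::comm_ring_1) fa)
   = sng ([GY i], []) 1 + sng ([GX (1 / of_nat (p i))], [GY i]) 1"
  by (simp add: B_Delta_eq)

lemma Tf_diff: "Tf \<alpha> \<beta> (x - y) = Tf \<alpha> \<beta> x - Tf \<alpha> \<beta> y"
  by (simp add: Tf_def lext_diff)

lemma Tf_scale: "Tf \<alpha> \<beta> (sng 0 c * x) = sng 0 c * Tf \<alpha> \<beta> x"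
  by (simp add: Tf_def lext_scale)

locale isoB =
  fixes G :: "rat set" and I :: "'i set" and p :: "'i \<Rightarrow> nat" and \<chi> :: "rat \<Rightarrow> 'k::field"
    and G' :: "rat set" and I' :: "'j set" and p' :: "'j \<Rightarrow> nat" and \<chi>' :: "rat \<Rightarrow> 'k"
    and \<phi> :: "('i, 'k) fa \<Rightarrow> ('j, 'k) fa"
  assumes D: "B_data G I p \<chi>" and D': "B_data G' I' p' \<chi>'"
    and H: "hopf_iso_B G I p \<chi> G' I' p' \<chi>' \<phi>"
begin

abbreviation "R \<equiv> B_ideal G I p \<chi>"
abbreviation "R' \<equiv> B_ideal G' I' p' \<chi>'"

lemma H_add: "\<phi> (f + g) = \<phi> f + \<phi> g" using H unfolding hopf_iso_B_def Let_def by blast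
lemma H_sc0: "\<phi> (fa_smult c f) = fa_smult c (\<phi> f)" using H unfolding hopf_iso_B_def Let_def by blast
lemma H_sc: "\<phi> (sng 0 c * f) = sng 0 c * \<phi> f" using H_sc0[of c f] by simp
lemma H_R: "f \<in> R \<longleftrightarrow> \<phi> f \<in> R'" using H unfolding hopf_iso_B_def Let_def by blast
lemma H_surj: "\<exists>f. g - \<phi> f \<in> R'" using H unfolding hopf_iso_B_def Let_def by blast
lemma H_mult0: "\<phi> (fa_mult f g) - fa_mult (\<phi> f) (\<phi> g) \<in> R'" using H unfolding hopf_iso_B_def Let_def by blast
lemma H_mult: "\<phi> (f * g) - \<phi> f * \<phi> g \<in> R'" using H_mult0[of f g] by simp
lemma H_one0: "\<phi> fa_one - fa_one \<in> R'" using H unfolding hopf_iso_B_def Let_def by blast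
lemma H_one: "\<phi> 1 - 1 \<in> R'" using H_one0 by simp
lemma H_Delta: "ft_map \<phi> (B_Delta p f) - B_Delta p' (\<phi> f) \<in> ft_ideal R'"
  using H unfolding hopf_iso_B_def Let_def by blast
lemma H_eps: "B_eps G' (\<phi> f) = B_eps G f" using H unfolding hopf_iso_B_def Let_def by blast

lemma phi_zero: "\<phi> 0 = 0" using H_add[of 0 0] by simp
lemma phi_diff: "\<phi> (f - g) = \<phi> f - \<phi> g" using H_add[of "f - g" g] by (simp add: algebra_simps)
lemma phi_lext: "\<phi> (lext P f) = lext (\<lambda>w. \<phi> (P w)) f"
proof (induction f rule: pm_induct)
  case zero then show ?case by (simp add: phi_zero)
next
  case (single_add w c f)
  then show ?case by (simp add: lext_add H_add H_sc)
qed
lemma phi_expand: "\<phi> f = lext (\<lambda>w. \<phi> (sng w 1)) f"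
  using phi_lext[of "\<lambda>w. sng w 1" f] by (simp add: lext_id)

lemma jI': "\<exists>j. j \<in> I'" using D_two[OF D'] by blast
lemma iI: "\<exists>i. i \<in> I" using D_two[OF D] by blast

lemma R'_pim: "r \<in> R' \<Longrightarrow> pim G' r = 0" using ideal_killed[OF D'] jI' by blast
lemma R'_taum: "r \<in> R' \<Longrightarrow> j \<in> I' \<Longrightarrow> taum G' p' \<chi>' j r = 0" using ideal_killed[OF D'] by blast
lemma R'_mum: "r \<in> R' \<Longrightarrow> j \<in> I' \<Longrightarrow> mum G' p' \<chi>' j r = 0" using ideal_killed[OF D'] by blast

lemma R_phi: "f \<in> R \<Longrightarrow> \<phi> f \<in> R'" using H_R by blast

lemma P_mult: "pim G' (\<phi> (f * g)) = pim G' (\<phi> f) * pim G' (\<phi> g)"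
  using R'_pim[OF H_mult[of f g]] by (simp add: pim_diff pim_mult)
lemma P_one: "pim G' (\<phi> 1) = 1"
  using R'_pim[OF H_one] by (simp add: pim_diff)
lemma T_mult: "j \<in> I' \<Longrightarrow> taum G' p' \<chi>' j (\<phi> (f * g)) = taum G' p' \<chi>' j (\<phi> f) * taum G' p' \<chi>' j (\<phi> g)"
  using R'_taum[OF H_mult[of f g]] by (simp add: taum_diff taum_mult)
lemma T_one: "j \<in> I' \<Longrightarrow> taum G' p' \<chi>' j (\<phi> 1) = 1"
  using R'_taum[OF H_one] by (simp add: taum_diff)
lemma M_mult: "j \<in> I' \<Longrightarrow> mum G' p' \<chi>' j (\<phi> (f * g))
   = pim G' (\<phi> f) * mum G' p' \<chi>' j (\<phi> g) + mum G' p' \<chi>' j (\<phi> f) * taum G' p' \<chi>' j (\<phi> g)"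
  using R'_mum[OF H_mult[of f g]] by (simp add: mum_diff mum_mult)
lemma M_one: "j \<in> I' \<Longrightarrow> mum G' p' \<chi>' j (\<phi> 1) = 0"
  using R'_mum[OF H_one] by (simp add: mum_diff)

lemma P_kill_Y: "i \<in> I \<Longrightarrow> pim G' (\<phi> (sng [GY i] 1)) = 0"
  by (rule kill_Y[OF D, where \<rho> = "\<lambda>f. pim G' (\<phi> f)"])
     (simp_all add: H_add pim_add H_sc pim_scale P_mult P_one R'_pim R_phi)

lemma T_kill_Y: "i \<in> I \<Longrightarrow> j \<in> I' \<Longrightarrow> taum G' p' \<chi>' j (\<phi> (sng [GY i] 1)) = 0"
  by (rule kill_Y[OF D, where \<rho> = "\<lambda>f. taum G' p' \<chi>' j (\<phi> f)"])
     (simp_all add: H_add taum_add H_sc taum_scale T_mult T_one R'_taum R_phi)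

lemma Tf_phi_Delta:
  assumes a: "\<And>r. r \<in> R' \<Longrightarrow> lext \<alpha> r = 0" and b: "\<And>r. r \<in> R' \<Longrightarrow> lext \<beta> r = 0"
  shows "Tf \<alpha> \<beta> (ft_map \<phi> (B_Delta p f)) = Tf \<alpha> \<beta> (B_Delta p' (\<phi> f))"
  using Tf_killed[OF H_Delta[of f] a b] by (simp add: Tf_diff)

lemma pim_kills: "r \<in> R' \<Longrightarrow> lext (piw G') r = 0" using R'_pim by (simp add: pim_def)
lemma mum_kills: "j \<in> I' \<Longrightarrow> r \<in> R' \<Longrightarrow> lext (muw G' p' \<chi>' j) r = 0" using R'_mum by (simp add: mum_def)
lemma taum_kills: "j \<in> I' \<Longrightarrow> r \<in> R' \<Longrightarrow> lext (tw G' p' \<chi>' j) r = 0" using R'_taum by (simp add: taum_def)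

lemma grp: assumes a: "a \<in> G" shows "\<exists>b\<in>G'. pim G' (\<phi> (sng [GX a] 1)) = sng b 1"
proof -
  let ?t = "pim G' (\<phi> (sng [GX a] 1))"
  have "Tf (piw G') (piw G') (ft_map \<phi> (B_Delta p (sng [GX a] 1))) = Tf (piw G') (piw G') (B_Delta p' (\<phi> (sng [GX a] 1)))"
    by (rule Tf_phi_Delta) (simp_all add: pim_kills)
  then have bx: "box ?t ?t = Dk ?t"
    by (simp add: Delta_X ft_map_single Tf_scale Tf_tensor Tpp_Delta flip: pim_def)
  have "aug ?t = B_eps G' (\<phi> (sng [GX a] 1))" by (simp add: B_eps_aug[OF D'])
  also have "\<dots> = 1" using a by (simp add: H_eps B_eps_single epsw_def)
  finally obtain b where b: "?t = sng b 1" using grouplike_kQ[OF bx] by blast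
  have "b \<in> kys ?t" using b by simp
  then have "b \<in> G'" using keys_pim[OF D'] by blast
  then show ?thesis using b by blast
qed

end


lemma sng_1_inj: "sng a (1::'k::comm_ring_1) = sng b 1 \<Longrightarrow> a = b"
  by (metis lookup_single_eq lookup_single_not_eq zero_neq_one)

context isoB
begin

definition fm :: "rat \<Rightarrow> rat" where
  "fm a = (SOME b. b \<in> G' \<and> pim G' (\<phi> (sng [GX a] 1)) = sng b 1)"

lemma fm: assumes "a \<in> G" shows "fm a \<in> G'" "pim G' (\<phi> (sng [GX a] 1)) = sng (fm a) 1"
proof -
  have "fm a \<in> G' \<and> pim G' (\<phi> (sng [GX a] 1)) = sng (fm a) 1"
    unfolding fm_def by (rule someI_ex) (use grp[OF assms] in blast)
  then show "fm a \<in> G'" "pim G' (\<phi> (sng [GX a] 1)) = sng (fm a) 1" by auto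
qed

lemma P_cong: "x - y \<in> R \<Longrightarrow> pim G' (\<phi> x) = pim G' (\<phi> y)"
proof -
  assume "x - y \<in> R"
  then have "pim G' (\<phi> (x - y)) = 0" by (rule R'_pim[OF R_phi])
  then show ?thesis by (simp add: phi_diff pim_diff)
qed
lemma M_cong: "j \<in> I' \<Longrightarrow> x - y \<in> R \<Longrightarrow> mum G' p' \<chi>' j (\<phi> x) = mum G' p' \<chi>' j (\<phi> y)"
proof -
  assume j: "j \<in> I'" and "x - y \<in> R"
  then have "mum G' p' \<chi>' j (\<phi> (x - y)) = 0" using R'_mum[OF R_phi] by blast
  then show ?thesis by (simp add: phi_diff mum_diff)
qed
lemma P_killR: "x \<in> R \<Longrightarrow> pim G' (\<phi> x) = 0"
  using R'_pim[OF R_phi] .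
lemma M_killR: "j \<in> I' \<Longrightarrow> x \<in> R \<Longrightarrow> mum G' p' \<chi>' j (\<phi> x) = 0"
  using R'_mum[OF R_phi] by blast
lemma T_killR: "j \<in> I' \<Longrightarrow> x \<in> R \<Longrightarrow> taum G' p' \<chi>' j (\<phi> x) = 0"
  using R'_taum[OF R_phi] by blast

lemma fm_add: assumes a: "a \<in> G" and b: "b \<in> G" shows "fm (a + b) = fm a + fm b"
proof -
  have "pim G' (\<phi> (sng [GX a] 1 * sng [GX b] 1)) = pim G' (\<phi> (sng [GX (a + b)] 1))"
    by (rule P_cong[OF rel_XX[OF D a b]])
  moreover note P_mult[of "sng [GX a] 1" "sng [GX b] 1"]
  ultimately have "sng (fm a + fm b) 1 = sng (fm (a + b)) (1::'k)"
    by (simp only: fm(2)[OF a] fm(2)[OF b] fm(2)[OF D_add[OF D a b]] mult_single) simp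
  then show ?thesis by (metis sng_1_inj)
qed

lemma fm_zero: "fm 0 = 0"
proof -
  have "pim G' (\<phi> (sng [GX 0] 1)) = pim G' (\<phi> 1)" by (rule P_cong[OF rel_X0[OF D]])
  then have "sng (fm 0) 1 = sng 0 (1::'k)" using fm(2)[OF D_zero[OF D]] by (simp add: P_one)
  then show ?thesis by (metis sng_1_inj)
qed

lemma s_ne0: "j \<in> I' \<Longrightarrow> 1 / of_nat (p' j) \<noteq> (0::rat)"
proof -
  assume j: "j \<in> I'"
  have "2 \<le> p' j" using D_p2[OF D' j] .
  then show ?thesis by simp
qed

lemma M_X: assumes a: "a \<in> G" and j: "j \<in> I'" shows "mum G' p' \<chi>' j (\<phi> (sng [GX a] 1)) = 0"
proof -
  let ?t = "pim G' (\<phi> (sng [GX a] 1))" and ?m = "mum G' p' \<chi>' j (\<phi> (sng [GX a] 1))"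
  let ?s = "1 / of_nat (p' j) :: rat"
  have sG: "?s \<in> G'" using D_inv[OF D' j] .
  have "Tf (piw G') (muw G' p' \<chi>' j) (ft_map \<phi> (B_Delta p (sng [GX a] 1)))
      = Tf (piw G') (muw G' p' \<chi>' j) (B_Delta p' (\<phi> (sng [GX a] 1)))"
    by (rule Tf_phi_Delta) (simp_all add: pim_kills mum_kills j)
  then have e1: "box ?t ?m = Dk ?m * sng (?s, 0) 1"
    by (simp add: Delta_X ft_map_single Tf_scale Tf_tensor Tpm_Delta[where p=p' and j=j and G=G', OF sG] flip: pim_def mum_def)
  have "Tf (muw G' p' \<chi>' j) (piw G') (ft_map \<phi> (B_Delta p (sng [GX a] 1)))
      = Tf (muw G' p' \<chi>' j) (piw G') (B_Delta p' (\<phi> (sng [GX a] 1)))"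
    by (rule Tf_phi_Delta) (simp_all add: pim_kills mum_kills j)
  then have e2: "box ?m ?t = Dk ?m"
    by (simp add: Delta_X ft_map_single Tf_scale Tf_tensor Tmp_Delta flip: pim_def mum_def)
  have t: "?t = sng (fm a) 1" using fm(2)[OF a] .
  show ?thesis
  proof (rule poly_mapping_eqI, rule ccontr)
    fix e assume ne: "lkp ?m e \<noteq> lkp 0 e"
    have "lkp (box ?m ?t) (e, fm a) = lkp (Dk ?m) (e, fm a)" using e2 by simp
    then have ef: "e = fm a" using ne by (simp add: box_lookup Dk_lookup t split: if_splits)
    have "lkp (box ?t ?m) (fm a, e) = lkp (Dk ?m * sng (?s, 0) 1) (fm a, e)" using e1 by simp
    then have "fm a = e + ?s" using ne by (simp add: box_lookup Dk_shift_lookup t split: if_splits)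
    then show False using ef s_ne0[OF j] by simp
  qed
qed

lemma M_Y:
  assumes i: "i \<in> I" and j: "j \<in> I'" and m: "mum G' p' \<chi>' j (\<phi> (sng [GY i] 1)) \<noteq> 0"
  shows "fm (1 / of_nat (p i)) = 1 / of_nat (p' j)"
    and "\<exists>c. c \<noteq> 0 \<and> mum G' p' \<chi>' j (\<phi> (sng [GY i] 1)) = sng 0 c"
proof -
  let ?m = "mum G' p' \<chi>' j (\<phi> (sng [GY i] 1))"
  let ?s = "1 / of_nat (p' j) :: rat" and ?a = "1 / of_nat (p i) :: rat"
  have sG: "?s \<in> G'" using D_inv[OF D' j] .
  have aG: "?a \<in> G" using D_inv[OF D i] .
  have PY: "pim G' (\<phi> (sng [GY i] 1)) = 0" using P_kill_Y[OF i] .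
  have MX: "mum G' p' \<chi>' j (\<phi> (sng [GX ?a] 1)) = 0" using M_X[OF aG j] .
  have "Tf (piw G') (muw G' p' \<chi>' j) (ft_map \<phi> (B_Delta p (sng [GY i] 1)))
      = Tf (piw G') (muw G' p' \<chi>' j) (B_Delta p' (\<phi> (sng [GY i] 1)))"
    by (rule Tf_phi_Delta) (simp_all add: pim_kills mum_kills j)
  then have e1: "box (sng (fm ?a) 1) ?m = Dk ?m * sng (?s, 0) 1"
    by (simp add: Delta_Y ft_map_single ft_map_add Tf_add Tf_scale Tf_tensor Tpm_Delta[where p=p' and j=j and G=G', OF sG] PY fm(2)[OF aG]
        flip: pim_def mum_def)
  have "Tf (muw G' p' \<chi>' j) (piw G') (ft_map \<phi> (B_Delta p (sng [GY i] 1)))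
      = Tf (muw G' p' \<chi>' j) (piw G') (B_Delta p' (\<phi> (sng [GY i] 1)))"
    by (rule Tf_phi_Delta) (simp_all add: pim_kills mum_kills j)
  then have e2: "box ?m 1 = Dk ?m"
    by (simp add: Delta_Y ft_map_single ft_map_add Tf_add Tf_scale Tf_tensor Tmp_Delta PY MX P_one
        flip: pim_def mum_def)
  have k0: "e = 0" if e: "lkp ?m e \<noteq> 0" for e
  proof -
    have "lkp (box ?m 1) (e, e) = lkp (Dk ?m) (e, e)" using e2 by simp
    then show ?thesis using e by (simp add: box_lookup Dk_lookup lookup_one when_def split: if_splits)
  qed
  have m0: "lkp ?m 0 \<noteq> 0"
  proof
    assume z: "lkp ?m 0 = 0"
    have "?m = 0" by (rule poly_mapping_eqI) (metis k0 z lookup_zero)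
    then show False using m by simp
  qed
  have "lkp (box (sng (fm ?a) 1) ?m) (fm ?a, 0) = lkp (Dk ?m * sng (?s, 0) 1) (fm ?a, 0)" using e1 by simp
  then show "fm ?a = ?s" using m0 by (simp add: box_lookup Dk_shift_lookup split: if_splits)
  have "?m = sng 0 (lkp ?m 0)"
    by (rule poly_mapping_eqI) (metis k0 lookup_single_eq lookup_single_not_eq)
  then show "\<exists>c. c \<noteq> 0 \<and> ?m = sng 0 c" using m0 by blast
qed

end


context isoB
begin

lemma chi_rel:
  assumes i: "i \<in> I" and j: "j \<in> I'" and m: "mum G' p' \<chi>' j (\<phi> (sng [GY i] 1)) \<noteq> 0" and a: "a \<in> G"
  shows "\<chi> (a / of_nat (p i)) = \<chi>' (fm a / of_nat (p' j))"
proof -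
  obtain c where c: "c \<noteq> 0" "mum G' p' \<chi>' j (\<phi> (sng [GY i] 1)) = sng 0 c" using M_Y(2)[OF i j m] by blast
  let ?k = "\<chi> (a / of_nat (p i))" and ?k' = "\<chi>' (fm a / of_nat (p' j))"
  have faG: "fm a \<in> G'" using fm(1)[OF a] .
  have k'nz: "?k' \<noteq> 0" using D_nz[OF D' GM_mem[OF j faG]] .
  have PX: "pim G' (\<phi> (sng [GX a] 1)) = sng (fm a) 1" using fm(2)[OF a] .
  have MX: "mum G' p' \<chi>' j (\<phi> (sng [GX a] 1)) = 0" using M_X[OF a j] .
  have PY: "pim G' (\<phi> (sng [GY i] 1)) = 0" using P_kill_Y[OF i] .
  have TX: "taum G' p' \<chi>' j (\<phi> (sng [GX a] 1)) = sng (fm a) (inverse ?k')"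
    by (simp add: taum_twist[OF D' j] PX twist_single[OF D'])
  have "mum G' p' \<chi>' j (\<phi> (sng [GX a] 1 * sng [GY i] 1 - sng 0 ?k * (sng [GY i] 1 * sng [GX a] 1))) = 0"
    by (rule M_killR[OF j rel_XY[OF D a i]])
  then have "mum G' p' \<chi>' j (\<phi> (sng [GX a] 1 * sng [GY i] 1)) - sng 0 ?k * mum G' p' \<chi>' j (\<phi> (sng [GY i] 1 * sng [GX a] 1)) = 0"
    by (simp only: phi_diff H_sc mum_diff mum_scale)
  then have "sng (fm a) 1 * sng 0 c - sng 0 ?k * (sng 0 c * sng (fm a) (inverse ?k')) = (0 :: 'k kQ)"
    by (simp only: M_mult[OF j] PX MX PY TX c(2)) simp
  then have "sng (fm a) (c - ?k * (c * inverse ?k')) = (0 :: 'k kQ)"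
    by (simp add: mult_single single_diff)
  then have "c - ?k * (c * inverse ?k') = 0" by (metis lookup_single_eq lookup_zero)
  then have "c * (1 - ?k * inverse ?k') = 0" by (simp add: algebra_simps)
  then have "?k * inverse ?k' = 1" using c(1) by simp
  then show ?thesis using k'nz by (simp add: field_simps)
qed

lemma sng_word_cons: "sng (g # w) (1::'k) = sng [g] 1 * sng w 1"
  by (simp add: mult_single)

lemma P_word: "pim G' (\<phi> (sng w 1)) = 0 \<or> (\<exists>s\<in>G. pim G' (\<phi> (sng w 1)) = sng (fm s) 1)"
proof (induction w)
  case Nil
  have "pim G' (\<phi> (sng [] 1)) = sng (fm 0) 1" by (simp add: P_one fm_zero)
  then show ?case using D_zero[OF D] by blast
next
  case (Cons g w)
  have e: "pim G' (\<phi> (sng (g # w) 1)) = pim G' (\<phi> (sng [g] 1)) * pim G' (\<phi> (sng w 1))"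
    by (metis P_mult sng_word_cons)
  show ?case
  proof (cases g)
    case (GX a)
    show ?thesis
    proof (cases "a \<in> G")
      case False
      then show ?thesis using e GX P_killR[OF rel_Xbad[OF D False]] by simp
    next
      case True
      from Cons show ?thesis
      proof
        assume "pim G' (\<phi> (sng w 1)) = 0" then show ?thesis using e by simp
      next
        assume "\<exists>s\<in>G. pim G' (\<phi> (sng w 1)) = sng (fm s) 1"
        then obtain s where s: "s \<in> G" "pim G' (\<phi> (sng w 1)) = sng (fm s) 1" by blast
        have "pim G' (\<phi> (sng (g # w) 1)) = sng (fm (a + s)) 1"
          using e GX fm(2)[OF True] s by (simp add: mult_single fm_add[OF True s(1)])
        then show ?thesis using D_add[OF D True s(1)] by blast
      qed
    qed
  next
    case (GY i)
    show ?thesis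
    proof (cases "i \<in> I")
      case False then show ?thesis using e GY P_killR[OF rel_Ybad[OF D False]] by simp
    next
      case True then show ?thesis using e GY P_kill_Y[OF True] by simp
    qed
  qed
qed

lemma M_word: assumes j: "j \<in> I'" shows "mum G' p' \<chi>' j (\<phi> (sng w 1)) \<noteq> 0 \<Longrightarrow>
   \<exists>i\<in>I. mum G' p' \<chi>' j (\<phi> (sng [GY i] 1)) \<noteq> 0"
proof (induction w)
  case Nil then show ?case by (simp add: M_one[OF j])
next
  case (Cons g w)
  have e: "mum G' p' \<chi>' j (\<phi> (sng (g # w) 1)) = pim G' (\<phi> (sng [g] 1)) * mum G' p' \<chi>' j (\<phi> (sng w 1))
      + mum G' p' \<chi>' j (\<phi> (sng [g] 1)) * taum G' p' \<chi>' j (\<phi> (sng w 1))"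
    by (metis M_mult[OF j] sng_word_cons)
  show ?case
  proof (cases "mum G' p' \<chi>' j (\<phi> (sng [g] 1)) = 0")
    case True
    then have "mum G' p' \<chi>' j (\<phi> (sng w 1)) \<noteq> 0" using e Cons.prems by auto
    then show ?thesis by (rule Cons.IH)
  next
    case False
    show ?thesis
    proof (cases g)
      case (GX a)
      show ?thesis
      proof (cases "a \<in> G")
        case True then show ?thesis using False GX M_X[OF True j] by simp
      next
        case nG: False then show ?thesis using False GX M_killR[OF j rel_Xbad[OF D nG]] by simp
      qed
    next
      case (GY i)
      show ?thesis
      proof (cases "i \<in> I")
        case True then show ?thesis using False GY by blast
      next
        case nI: False then show ?thesis using False GY M_killR[OF j rel_Ybad[OF D nI]] by simp
      qed
    qed
  qed
qed

lemma G'_sub: assumes b: "b \<in> G'" shows "\<exists>a\<in>G. b = fm a"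
proof -
  obtain f where f: "sng [GX b] 1 - \<phi> f \<in> R'" using H_surj by blast
  have "pim G' (sng [GX b] 1 - \<phi> f) = 0" by (rule R'_pim[OF f])
  then have "sng b 1 = pim G' (\<phi> f)" using b by (simp add: pim_diff)
  also have "\<dots> = lext (\<lambda>w. pim G' (\<phi> (sng w 1))) f"
    by (subst phi_expand) (simp add: pim_def lext_compose)
  finally have e: "sng b 1 = lext (\<lambda>w. pim G' (\<phi> (sng w 1))) f" .
  have "kys (lext (\<lambda>w. pim G' (\<phi> (sng w 1))) f) \<subseteq> fm ` G"
  proof (rule keys_lext_subset[OF D'])
    fix w
    from P_word[of w] show "kys (pim G' (\<phi> (sng w 1))) \<subseteq> fm ` G" by auto
  qed
  then have "b \<in> fm ` G" using e[symmetric] by simp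
  then show ?thesis by blast
qed

lemma I'_sub: assumes j: "j \<in> I'" shows "\<exists>i\<in>I. mum G' p' \<chi>' j (\<phi> (sng [GY i] 1)) \<noteq> 0"
proof -
  obtain f where f: "sng [GY j] 1 - \<phi> f \<in> R'" using H_surj by blast
  have "mum G' p' \<chi>' j (sng [GY j] 1 - \<phi> f) = 0" by (rule R'_mum[OF f j])
  then have "1 = mum G' p' \<chi>' j (\<phi> f)" by (simp add: mum_diff)
  also have "\<dots> = lext (\<lambda>w. mum G' p' \<chi>' j (\<phi> (sng w 1))) f"
    by (subst phi_expand) (simp add: mum_def lext_compose)
  finally have e: "lext (\<lambda>w. mum G' p' \<chi>' j (\<phi> (sng w 1))) f \<noteq> 0" by (metis one_neq_zero)
  then obtain w where "mum G' p' \<chi>' j (\<phi> (sng w 1)) \<noteq> 0" using lext_zero_fun by metis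
  then show ?thesis by (rule M_word[OF j])
qed

lemma natmul_G: "x \<in> G \<Longrightarrow> of_nat k * x \<in> G"
  by (induction k) (simp_all add: D_zero[OF D] D_add[OF D] distrib_right)

lemma fm_nat: "x \<in> G \<Longrightarrow> fm (of_nat k * x) = of_nat k * fm x"
proof (induction k)
  case 0 then show ?case by (simp add: fm_zero)
next
  case (Suc k)
  have "fm (of_nat (Suc k) * x) = fm (of_nat k * x + x)" by (simp add: distrib_right add.commute)
  also have "\<dots> = fm (of_nat k * x) + fm x" by (rule fm_add[OF natmul_G[OF Suc.prems] Suc.prems])
  finally show ?case using Suc by (simp add: distrib_right add.commute)
qed

lemma fm_neg: "x \<in> G \<Longrightarrow> fm (- x) = - fm x"
  using fm_add[of x "- x"] D_neg[OF D] fm_zero by force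

lemma fm_int: "fm (of_int m) = of_int m * fm 1"
proof (cases "m \<ge> 0")
  case True
  have "fm (of_int m) = fm (of_nat (nat m) * 1)" using True by simp
  also have "\<dots> = of_nat (nat m) * fm 1" by (rule fm_nat) (use D_int[OF D, of 1] in simp)
  finally show ?thesis using True by simp
next
  case False
  have one: "(1::rat) \<in> G" using D_int[OF D, of 1] by simp
  have "fm (of_int m) = fm (- (of_nat (nat (- m)) * 1))" using False by simp
  also have "\<dots> = - fm (of_nat (nat (- m)) * 1)" by (rule fm_neg[OF natmul_G[OF one]])
  also have "\<dots> = - (of_nat (nat (- m)) * fm 1)" by (simp only: fm_nat[OF one])
  finally show ?thesis using False by simp
qed

lemma fm_lin: assumes a: "a \<in> G" shows "fm a = a * fm 1"
proof -
  obtain m n where q: "quotient_of a = (m, n)" by fastforce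
  have an: "a = of_int m / of_int n" using quotient_of_div[OF q] .
  have n: "n > 0" using quotient_of_denom_pos[OF q] .
  have "of_nat (nat n) * a = of_int m" using an n by simp
  then have "of_nat (nat n) * fm a = of_int m * fm 1" using fm_nat[OF a, of "nat n"] fm_int[of m] by simp
  then have h: "of_int n * fm a = of_int m * fm 1" using n by simp
  have "fm a = (of_int m / of_int n) * fm 1" using h n by (simp add: field_simps)
  then show ?thesis using an by simp
qed

end


lemma lext_diff_fun: "lext P f - lext Q f = lext (\<lambda>w. P w - Q w) f"
  by (simp add: lext_def sum_subtractf[symmetric] right_diff_distrib)

context isoB
begin

lemma R'_add: "x \<in> R' \<Longrightarrow> y \<in> R' \<Longrightarrow> x + y \<in> R'" unfolding B_ideal_def by (rule fa_ideal.add)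
lemma R'_diff: "x \<in> R' \<Longrightarrow> y \<in> R' \<Longrightarrow> x - y \<in> R'" unfolding B_ideal_def by (rule fa_ideal_diff)
lemma R'_ml: "x \<in> R' \<Longrightarrow> u * x \<in> R'" unfolding B_ideal_def by (rule fa_ideal_mult_left)
lemma R'_mr: "x \<in> R' \<Longrightarrow> x * u \<in> R'" unfolding B_ideal_def by (rule fa_ideal_mult_right)

definition psi :: "('j, 'k) fa \<Rightarrow> ('i, 'k) fa" where
  "psi = lext (\<lambda>w. SOME f. sng w 1 - \<phi> f \<in> R')"

lemma psi_add: "psi (x + y) = psi x + psi y" by (simp add: psi_def lext_add)
lemma psi_scale: "psi (sng 0 c * x) = sng 0 c * psi x" by (simp add: psi_def lext_scale)
lemma psi_diff: "psi (x - y) = psi x - psi y" by (simp add: psi_def lext_diff)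

lemma psi_right: "g - \<phi> (psi g) \<in> R'"
proof -
  have s: "sng w 1 - \<phi> (SOME f. sng w 1 - \<phi> f \<in> R') \<in> R'" for w :: "'j gen list"
    by (rule someI_ex) (rule H_surj)
  have "g - \<phi> (psi g) = lext (\<lambda>w. sng w 1 - \<phi> (SOME f. sng w 1 - \<phi> f \<in> R')) g"
    by (simp add: psi_def phi_lext lext_id lext_diff_fun[symmetric])
  also have "\<dots> \<in> R'" unfolding B_ideal_def by (rule fa_ideal_lext) (use s in \<open>simp add: B_ideal_def\<close>)
  finally show ?thesis .
qed

lemma psi_left: "f - psi (\<phi> f) \<in> R"
proof -
  have "\<phi> (f - psi (\<phi> f)) = \<phi> f - \<phi> (psi (\<phi> f))" by (rule phi_diff)
  then have "\<phi> (f - psi (\<phi> f)) \<in> R'" using psi_right[of "\<phi> f"] by simp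
  then show ?thesis using H_R by blast
qed

lemma psi_R: "x \<in> R' \<Longrightarrow> psi x \<in> R"
proof -
  assume x: "x \<in> R'"
  have "\<phi> (psi x) = x - (x - \<phi> (psi x))" by simp
  also have "\<dots> \<in> R'" by (rule R'_diff[OF x psi_right])
  finally show ?thesis using H_R by blast
qed

lemma psi_mult: "psi (x * y) - psi x * psi y \<in> R"
proof -
  let ?a = "\<phi> (psi x)" and ?b = "\<phi> (psi y)"
  have "\<phi> (psi (x * y) - psi x * psi y)
     = (\<phi> (psi (x * y)) - x * y) - (\<phi> (psi x * psi y) - ?a * ?b) - ((?a - x) * ?b + x * (?b - y))"
    by (simp add: phi_diff algebra_simps)
  also have "\<dots> \<in> R'"
  proof (rule R'_diff[OF R'_diff R'_add])
    show "\<phi> (psi (x * y)) - x * y \<in> R'"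
      using R'_ml[OF psi_right[of "x * y"], of "-1"] by simp
    show "\<phi> (psi x * psi y) - ?a * ?b \<in> R'" by (rule H_mult)
    show "(?a - x) * ?b \<in> R'" using R'_ml[OF psi_right[of x], of "-1"] by (intro R'_mr) simp
    show "x * (?b - y) \<in> R'" using R'_ml[OF psi_right[of y], of "-1"] by (intro R'_ml) simp
  qed
  finally show ?thesis using H_R by blast
qed

lemma psi_one: "psi 1 - 1 \<in> R"
proof -
  have "\<phi> (psi 1 - 1) = (\<phi> (psi 1) - 1) - (\<phi> 1 - 1)" by (simp add: phi_diff)
  also have "\<dots> \<in> R'"
    by (rule R'_diff[OF _ H_one]) (use R'_ml[OF psi_right[of 1], of "-1"] in simp)
  finally show ?thesis using H_R by blast
qed

lemma psi_lext: "psi (lext P f) = lext (\<lambda>w. psi (P w)) f"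
  by (simp add: psi_def lext_compose)

lemma R_pim: "r \<in> R \<Longrightarrow> pim G r = 0" using ideal_killed[OF D] iI by blast
lemma R_taum: "r \<in> R \<Longrightarrow> i \<in> I \<Longrightarrow> taum G p \<chi> i r = 0" using ideal_killed[OF D] by blast
lemma R_mum: "r \<in> R \<Longrightarrow> i \<in> I \<Longrightarrow> mum G p \<chi> i r = 0" using ideal_killed[OF D] by blast

lemma Q_mult: "pim G (psi (x * y)) = pim G (psi x) * pim G (psi y)"
  using R_pim[OF psi_mult[of x y]] by (simp add: pim_diff pim_mult)
lemma Q_one: "pim G (psi 1) = 1"
  using R_pim[OF psi_one] by (simp add: pim_diff)
lemma QT_mult: "i \<in> I \<Longrightarrow> taum G p \<chi> i (psi (x * y)) = taum G p \<chi> i (psi x) * taum G p \<chi> i (psi y)"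
  using R_taum[OF psi_mult[of x y]] by (simp add: taum_diff taum_mult)
lemma QT_one: "i \<in> I \<Longrightarrow> taum G p \<chi> i (psi 1) = 1"
  using R_taum[OF psi_one] by (simp add: taum_diff)
lemma QM_mult: "i \<in> I \<Longrightarrow> mum G p \<chi> i (psi (x * y))
   = pim G (psi x) * mum G p \<chi> i (psi y) + mum G p \<chi> i (psi x) * taum G p \<chi> i (psi y)"
  using R_mum[OF psi_mult[of x y]] by (simp add: mum_diff mum_mult)

lemma Q_Y: "pim G (psi (sng [GY j] 1)) = 0"
proof (cases "j \<in> I'")
  case True
  show ?thesis
    by (rule kill_Y[OF D' True, where \<rho> = "\<lambda>f. pim G (psi f)"])
       (simp_all add: psi_add pim_add psi_scale pim_scale Q_mult Q_one R_pim psi_R)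
next
  case False
  then show ?thesis using R_pim[OF psi_R[OF rel_Ybad[OF D' False]]] by simp
qed

lemma QT_Y: "i \<in> I \<Longrightarrow> taum G p \<chi> i (psi (sng [GY j] 1)) = 0"
proof (cases "j \<in> I'")
  case True
  assume i: "i \<in> I"
  show ?thesis
    by (rule kill_Y[OF D' True, where \<rho> = "\<lambda>f. taum G p \<chi> i (psi f)"])
       (simp_all add: i psi_add taum_add psi_scale taum_scale QT_mult QT_one R_taum psi_R)
next
  case False
  assume i: "i \<in> I"
  show ?thesis using R_taum[OF psi_R[OF rel_Ybad[OF D' False]] i] .
qed

lemma psi_word: assumes i: "i \<in> I"
  shows "(1 \<le> countY w \<longrightarrow> pim G (psi (sng w 1)) = 0 \<and> taum G p \<chi> i (psi (sng w 1)) = 0)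
       \<and> (2 \<le> countY w \<longrightarrow> mum G p \<chi> i (psi (sng w 1)) = 0)"
proof (induction w)
  case Nil then show ?case by simp
next
  case (Cons g w)
  have e1: "pim G (psi (sng (g # w) 1)) = pim G (psi (sng [g] 1)) * pim G (psi (sng w 1))"
    by (metis Q_mult sng_word_cons)
  have e2: "taum G p \<chi> i (psi (sng (g # w) 1)) = taum G p \<chi> i (psi (sng [g] 1)) * taum G p \<chi> i (psi (sng w 1))"
    by (metis QT_mult[OF i] sng_word_cons)
  have e3: "mum G p \<chi> i (psi (sng (g # w) 1)) = pim G (psi (sng [g] 1)) * mum G p \<chi> i (psi (sng w 1))
      + mum G p \<chi> i (psi (sng [g] 1)) * taum G p \<chi> i (psi (sng w 1))"
    by (metis QM_mult[OF i] sng_word_cons)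
  show ?case
  proof (cases g)
    case (GX a)
    then show ?thesis using Cons e1 e2 e3 by simp
  next
    case (GY j)
    have "pim G (psi (sng [g] 1)) = 0" "taum G p \<chi> i (psi (sng [g] 1)) = 0"
      using Q_Y QT_Y[OF i] GY by auto
    then show ?thesis using Cons e1 e2 e3 GY by auto
  qed
qed

lemma M_nonzero: assumes i: "i \<in> I" shows "\<exists>j\<in>I'. mum G' p' \<chi>' j (\<phi> (sng [GY i] 1)) \<noteq> 0"
proof (rule ccontr)
  assume "\<not> ?thesis"
  then have m0: "\<And>j. j \<in> I' \<Longrightarrow> mum G' p' \<chi>' j (\<phi> (sng [GY i] 1)) = 0" by blast
  obtain t r where tr: "t \<in> J2" "r \<in> R'" "\<phi> (sng [GY i] 1) = t + r"
    using NF_kill[OF D' P_kill_Y[OF i] m0] by blast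
  have "mum G p \<chi> i (sng [GY i] 1 - psi (\<phi> (sng [GY i] 1))) = 0"
    by (rule R_mum[OF psi_left i])
  then have "mum G p \<chi> i (psi (\<phi> (sng [GY i] 1))) = 1" by (simp add: mum_diff)
  moreover have "mum G p \<chi> i (psi r) = 0" by (rule R_mum[OF psi_R[OF tr(2)] i])
  moreover have "mum G p \<chi> i (psi t) = 0"
  proof -
    have "psi t = lext (\<lambda>w. psi (sng w 1)) t" using psi_lext[of "\<lambda>w. sng w 1" t] by (simp add: lext_id)
    then have "mum G p \<chi> i (psi t) = lext (\<lambda>w. mum G p \<chi> i (psi (sng w 1))) t"
      by (simp add: mum_def lext_compose)
    also have "\<dots> = 0"
    proof (rule lext_zero_fun)
      fix w assume "w \<in> kys t"
      then have "2 \<le> countY w" using tr(1) unfolding J2_def by blast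
      then show "mum G p \<chi> i (psi (sng w 1)) = 0" using psi_word[OF i, of w] by blast
    qed
    finally show ?thesis .
  qed
  ultimately show False using tr(3) by (simp add: psi_add mum_add)
qed

end


lemma nat_ratio:
  fixes p1 p2 q1 q2 :: nat
  assumes "coprime p1 p2" "coprime q1 q2" "p1 * q2 = p2 * q1"
  shows "p1 = q1"
proof -
  have "p1 dvd p2 * q1" using assms(3) by (metis dvd_triv_left)
  then have a: "p1 dvd q1" using assms(1) by (simp add: coprime_dvd_mult_right_iff)
  have "q1 dvd p1 * q2" using assms(3) by (metis dvd_triv_right)
  then have b: "q1 dvd p1" using assms(2) by (simp add: coprime_dvd_mult_left_iff)
  show ?thesis using a b by (rule dvd_antisym)
qed

lemma GM_add:
  assumes add: "\<And>a b. a \<in> G \<Longrightarrow> b \<in> G \<Longrightarrow> a + b \<in> G" and z: "0 \<in> G"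
    and x: "x \<in> GM G I p" and y: "y \<in> GM G I p"
  shows "x + y \<in> GM G I p"
proof -
  obtain F1 g1 where 1: "finite F1" "F1 \<subseteq> I" "\<forall>i\<in>F1. g1 i \<in> G" "x = (\<Sum>i\<in>F1. g1 i / of_nat (p i))"
    using x unfolding GM_def by blast
  obtain F2 g2 where 2: "finite F2" "F2 \<subseteq> I" "\<forall>i\<in>F2. g2 i \<in> G" "y = (\<Sum>i\<in>F2. g2 i / of_nat (p i))"
    using y unfolding GM_def by blast
  let ?h1 = "\<lambda>i. if i \<in> F1 then g1 i else 0" and ?h2 = "\<lambda>i. if i \<in> F2 then g2 i else 0"
  have e1: "x = (\<Sum>i\<in>F1 \<union> F2. ?h1 i / of_nat (p i))"
    unfolding 1(4) by (rule sum.mono_neutral_cong_left) (use 1 2 in auto)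
  have e2: "y = (\<Sum>i\<in>F1 \<union> F2. ?h2 i / of_nat (p i))"
    unfolding 2(4) by (rule sum.mono_neutral_cong_left) (use 1 2 in auto)
  have s: "x + y = (\<Sum>i\<in>F1 \<union> F2. (?h1 i + ?h2 i) / of_nat (p i))"
    unfolding e1 e2 by (simp add: sum.distrib add_divide_distrib)
  have g: "\<forall>i\<in>F1 \<union> F2. ?h1 i + ?h2 i \<in> G" using 1(3) 2(3) add z by auto
  show ?thesis unfolding GM_def
    by (rule CollectI, rule exI[of _ "F1 \<union> F2"], rule exI[of _ "\<lambda>i. ?h1 i + ?h2 i"])
       (use s g 1 2 in auto)
qed

context isoB
begin

lemma r_one: "fm 1 = 1"
proof -
  obtain j1 j2 where j: "j1 \<in> I'" "j2 \<in> I'" "j1 \<noteq> j2" using D_two[OF D'] by blast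
  obtain i1 where i1: "i1 \<in> I" "mum G' p' \<chi>' j1 (\<phi> (sng [GY i1] 1)) \<noteq> 0" using I'_sub[OF j(1)] by blast
  obtain i2 where i2: "i2 \<in> I" "mum G' p' \<chi>' j2 (\<phi> (sng [GY i2] 1)) \<noteq> 0" using I'_sub[OF j(2)] by blast
  have f1: "fm (1 / of_nat (p i1)) = 1 / of_nat (p' j1)" by (rule M_Y(1)[OF i1(1) j(1) i1(2)])
  have f2: "fm (1 / of_nat (p i2)) = 1 / of_nat (p' j2)" by (rule M_Y(1)[OF i2(1) j(2) i2(2)])
  have p1: "p i1 \<ge> 2" "p i2 \<ge> 2" "p' j1 \<ge> 2" "p' j2 \<ge> 2"
    using D_p2[OF D i1(1)] D_p2[OF D i2(1)] D_p2[OF D' j(1)] D_p2[OF D' j(2)] by auto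
  have r1: "fm 1 = of_nat (p i1) / of_nat (p' j1)"
    using f1 fm_lin[OF D_inv[OF D i1(1)]] p1 by (simp add: field_simps)
  have r2: "fm 1 = of_nat (p i2) / of_nat (p' j2)"
    using f2 fm_lin[OF D_inv[OF D i2(1)]] p1 by (simp add: field_simps)
  have cq: "coprime (p' j1) (p' j2)" using D_cop[OF D' j] .
  have ii: "i1 \<noteq> i2"
  proof
    assume "i1 = i2"
    then have "p' j1 = p' j2" using r1 r2 p1 by (simp add: field_simps)
    then show False using cq p1 by simp
  qed
  have cp: "coprime (p i1) (p i2)" using D_cop[OF D i1(1) i2(1) ii] .
  have "(of_nat (p i1 * p' j2) :: rat) = of_nat (p i2 * p' j1)"
    using r1 r2 p1 by (simp add: field_simps)
  then have "p i1 * p' j2 = p i2 * p' j1" by (simp only: of_nat_eq_iff)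
  then have "p i1 = p' j1" using nat_ratio[OF cp cq] by blast
  then show ?thesis using r1 p1 by simp
qed

lemma fm_id: "a \<in> G \<Longrightarrow> fm a = a"
  using fm_lin r_one by simp

lemma G_eq: "G = G'"
proof
  show "G \<subseteq> G'" using fm(1) fm_id by force
  show "G' \<subseteq> G" using G'_sub fm_id by force
qed

lemma pI_eq: "p ` I = p' ` I'"
proof
  show "p ` I \<subseteq> p' ` I'"
  proof
    fix x assume "x \<in> p ` I"
    then obtain i where i: "i \<in> I" "x = p i" by blast
    obtain j where j: "j \<in> I'" "mum G' p' \<chi>' j (\<phi> (sng [GY i] 1)) \<noteq> 0" using M_nonzero[OF i(1)] by blast
    have "1 / of_nat (p i) = (1 / of_nat (p' j) :: rat)"
      using M_Y(1)[OF i(1) j] fm_id[OF D_inv[OF D i(1)]] by simp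
    then have "p i = p' j" by simp
    then show "x \<in> p' ` I'" using i j by blast
  qed
  show "p' ` I' \<subseteq> p ` I"
  proof
    fix x assume "x \<in> p' ` I'"
    then obtain j where j: "j \<in> I'" "x = p' j" by blast
    obtain i where i: "i \<in> I" "mum G' p' \<chi>' j (\<phi> (sng [GY i] 1)) \<noteq> 0" using I'_sub[OF j(1)] by blast
    have "1 / of_nat (p i) = (1 / of_nat (p' j) :: rat)"
      using M_Y(1)[OF i(1) j(1) i(2)] fm_id[OF D_inv[OF D i(1)]] by simp
    then have "p i = p' j" by simp
    then show "x \<in> p ` I" using i j by (metis image_eqI)
  qed
qed

lemma chi_gen: assumes i: "i \<in> I" and a: "a \<in> G" shows "\<chi> (a / of_nat (p i)) = \<chi>' (a / of_nat (p i))"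
proof -
  obtain j where j: "j \<in> I'" "mum G' p' \<chi>' j (\<phi> (sng [GY i] 1)) \<noteq> 0" using M_nonzero[OF i] by blast
  have "1 / of_nat (p i) = (1 / of_nat (p' j) :: rat)"
    using M_Y(1)[OF i j] fm_id[OF D_inv[OF D i]] by simp
  then have "p i = p' j" by simp
  then show ?thesis using chi_rel[OF i j(1) j(2) a] fm_id[OF a] by simp
qed

lemma GM_sub: assumes i: "i \<in> I" and a: "a \<in> G" shows "a / of_nat (p i) \<in> GM G' I' p'"
proof -
  obtain j where j: "j \<in> I'" "p i = p' j" using pI_eq i by (metis image_iff)
  show ?thesis using GM_mem[OF j(1), of a G' p'] a G_eq j(2) by simp
qed

lemma chi_eq: assumes q: "q \<in> GM G I p" shows "\<chi> q = \<chi>' q"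
proof -
  obtain F g where F: "finite F" "F \<subseteq> I" "\<forall>i\<in>F. g i \<in> G" "q = (\<Sum>i\<in>F. g i / of_nat (p i))"
    using q unfolding GM_def by blast
  have "F \<subseteq> I \<longrightarrow> (\<forall>i\<in>F. g i \<in> G) \<longrightarrow>
     (\<Sum>i\<in>F. g i / of_nat (p i)) \<in> GM G I p \<and> (\<Sum>i\<in>F. g i / of_nat (p i)) \<in> GM G' I' p' \<and>
     \<chi> (\<Sum>i\<in>F. g i / of_nat (p i)) = \<chi>' (\<Sum>i\<in>F. g i / of_nat (p i))"
    using F(1)
  proof (induction F rule: finite_induct)
    case empty then show ?case by (simp add: GM_zero D_chi0[OF D] D_chi0[OF D'])
  next
    case (insert i F)
    show ?case
    proof (intro impI)
      assume s: "insert i F \<subseteq> I" and gs: "\<forall>j\<in>insert i F. g j \<in> G"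
      have i: "i \<in> I" and gi: "g i \<in> G" using s gs by auto
      have IH: "(\<Sum>i\<in>F. g i / of_nat (p i)) \<in> GM G I p" "(\<Sum>i\<in>F. g i / of_nat (p i)) \<in> GM G' I' p'"
        "\<chi> (\<Sum>i\<in>F. g i / of_nat (p i)) = \<chi>' (\<Sum>i\<in>F. g i / of_nat (p i))"
        using insert.IH s gs by auto
      have m1: "g i / of_nat (p i) \<in> GM G I p" using GM_mem[OF i gi] .
      have m2: "g i / of_nat (p i) \<in> GM G' I' p'" using GM_sub[OF i gi] .
      have s1: "(\<Sum>i\<in>insert i F. g i / of_nat (p i)) = g i / of_nat (p i) + (\<Sum>i\<in>F. g i / of_nat (p i))"
        using insert.hyps by simp
      show "(\<Sum>i\<in>insert i F. g i / of_nat (p i)) \<in> GM G I p \<and> (\<Sum>i\<in>insert i F. g i / of_nat (p i)) \<in> GM G' I' p' \<and>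
         \<chi> (\<Sum>i\<in>insert i F. g i / of_nat (p i)) = \<chi>' (\<Sum>i\<in>insert i F. g i / of_nat (p i))"
        unfolding s1
        using GM_add[OF D_add[OF D] D_zero[OF D] m1 IH(1)] GM_add[OF D_add[OF D'] D_zero[OF D'] m2 IH(2)]
          D_hom[OF D m1 IH(1)] D_hom[OF D' m2 IH(2)] IH(3) chi_gen[OF i gi] by simp
    qed
  qed
  then show ?thesis using F by simp
qed

lemma onlyif: "G = G' \<and> p ` I = p' ` I' \<and> (\<forall>q\<in>GM G I p. \<chi> q = \<chi>' q)"
  using G_eq pI_eq chi_eq by blast

end


fun rl :: "('i \<Rightarrow> 'j) \<Rightarrow> 'i gen \<Rightarrow> 'j gen" where
  "rl \<sigma> (GX a) = GX a" | "rl \<sigma> (GY i) = GY (\<sigma> i)"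

definition validw :: "'i set \<Rightarrow> 'i gen list \<Rightarrow> bool" where
  "validw I w \<longleftrightarrow> (\<forall>i. GY i \<in> set w \<longrightarrow> i \<in> I)"

lemma validw_simps [simp]: "validw I []" "validw I (GX a # w) = validw I w"
  "validw I (GY i # w) = (i \<in> I \<and> validw I w)"
  by (auto simp: validw_def)

fun Phigen :: "'i set \<Rightarrow> ('i \<Rightarrow> 'j) \<Rightarrow> 'i gen \<Rightarrow> ('j, 'k::comm_ring_1) fa" where
  "Phigen I \<sigma> (GX a) = sng [GX a] 1"
| "Phigen I \<sigma> (GY i) = (if i \<in> I then sng [GY (\<sigma> i)] 1 else 0)"

definition Phiw :: "'i set \<Rightarrow> ('i \<Rightarrow> 'j) \<Rightarrow> 'i gen list \<Rightarrow> ('j, 'k::comm_ring_1) fa" where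
  "Phiw I \<sigma> = wprod (Phigen I \<sigma>)"

definition Phi :: "'i set \<Rightarrow> ('i \<Rightarrow> 'j) \<Rightarrow> ('i, 'k::comm_ring_1) fa \<Rightarrow> ('j, 'k) fa" where
  "Phi I \<sigma> = lext (Phiw I \<sigma>)"

lemma Phiw_eq: "Phiw I \<sigma> w = (if validw I w then sng (map (rl \<sigma>) w) 1 else 0)"
proof (induction w)
  case Nil then show ?case by (simp add: Phiw_def)
next
  case (Cons g w)
  then show ?case by (cases g) (auto simp: Phiw_def mult_single)
qed

lemma Phiw_append: "Phiw I \<sigma> (u @ v) = Phiw I \<sigma> u * Phiw I \<sigma> v"
  by (simp add: Phiw_def wprod_append)

lemma Phi_mult: "Phi I \<sigma> (f * g) = Phi I \<sigma> f * Phi I \<sigma> g"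
  unfolding Phi_def by (rule lext_mult) (simp add: Phiw_append)
lemma Phi_add: "Phi I \<sigma> (f + g) = Phi I \<sigma> f + Phi I \<sigma> g" by (simp add: Phi_def lext_add)
lemma Phi_diff: "Phi I \<sigma> (f - g) = Phi I \<sigma> f - Phi I \<sigma> g" by (simp add: Phi_def lext_diff)
lemma Phi_scale: "Phi I \<sigma> (sng 0 c * f) = sng 0 c * Phi I \<sigma> f" by (simp add: Phi_def lext_scale)
lemma Phi_single: "Phi I \<sigma> (sng w c) = sng 0 c * Phiw I \<sigma> w" by (simp add: Phi_def)
lemma Phi_one: "Phi I \<sigma> 1 = 1"
proof -
  have "Phi I \<sigma> (sng [] 1) = 1" by (simp only: Phi_single) (simp add: Phiw_def)
  then show ?thesis by simp
qed
lemma Phi_zero: "Phi I \<sigma> 0 = 0" by (simp add: Phi_def)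
lemma Phi_uminus: "Phi I \<sigma> (- f) = - Phi I \<sigma> f" by (simp add: Phi_def lext_uminus)

lemma Phi_X: "Phi I \<sigma> (sng [GX a] 1) = sng [GX a] 1"
  by (simp add: Phi_single Phiw_eq)
lemma Phi_Y: "Phi I \<sigma> (sng [GY i] 1) = (if i \<in> I then sng [GY (\<sigma> i)] 1 else 0)"
  by (simp add: Phi_single Phiw_eq)

lemma Phi_word: "Phi I \<sigma> (sng w 1) = Phiw I \<sigma> w"
  by (simp add: Phi_single)

lemma ft_tensor_single: "ft_tensor (sng u a) (sng v b) = sng (u, v) (a * b)"
  by (cases "a = 0"; cases "b = 0") (simp_all add: ft_tensor_def)

lemma ft_tensor_zero: "ft_tensor 0 x = 0" "ft_tensor x 0 = 0"
  by (simp_all add: ft_tensor_def)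

lemma tl1_mult: "tl1 (x * y) = tl1 x * tl1 y"
  unfolding tl1_def by (rule lext_mult) (simp add: mult_single)
lemma tr1_mult: "tr1 (x * y) = tr1 x * tr1 y"
  unfolding tr1_def by (rule lext_mult) (simp add: mult_single)

lemma tl1_add: "tl1 (x + y) = tl1 x + tl1 y" by (simp add: tl1_def lext_add)
lemma tr1_add: "tr1 (x + y) = tr1 x + tr1 y" by (simp add: tr1_def lext_add)
lemma tl1_zero: "tl1 0 = 0" by (simp add: tl1_def)
lemma tr1_zero: "tr1 0 = 0" by (simp add: tr1_def)

lemma tl1_tr1_comm: "tl1 x * tr1 y = tr1 y * tl1 x"
proof (induction x rule: pm_induct)
  case zero then show ?case by (simp add: tl1_zero)
next
  case (single_add u a x)
  have "tl1 (sng u a) * tr1 y = tr1 y * tl1 (sng u a)"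
  proof (induction y rule: pm_induct)
    case zero then show ?case by (simp add: tr1_zero)
  next
    case (single_add v b y)
    have "tl1 (sng u a) * tr1 (sng v b) = tr1 (sng v b) * tl1 (sng u a)"
      by (simp add: tl1_def tr1_def scalar_pull mult_single mult.commute)
    then show ?case using single_add
      by (simp add: tr1_add distrib_left distrib_right)
  qed
  then show ?case using single_add
    by (simp add: tl1_add distrib_left distrib_right)
qed

lemma ft_map_Phi_mult:
  fixes I :: "'i set" and \<sigma> :: "'i \<Rightarrow> 'j" and A B :: "('i,'k::comm_ring_1) ft"
  shows "ft_map (Phi I \<sigma>) (A * B) = ft_map (Phi I \<sigma>) A * ft_map (Phi I \<sigma>) B"
proof -
  have L: "ft_map (Phi I \<sigma>) = lext (\<lambda>uv. tl1 (Phiw I \<sigma> (fst uv)) * tr1 (Phiw I \<sigma> (snd uv)))"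
    by (simp add: ft_map_eq ft_tensor_eq Phi_word)
  have M: "tl1 (Phiw I \<sigma> (fst (x + y))) * tr1 (Phiw I \<sigma> (snd (x + y)))
     = tl1 (Phiw I \<sigma> (fst x)) * tr1 (Phiw I \<sigma> (snd x)) * (tl1 (Phiw I \<sigma> (fst y)) * tr1 (Phiw I \<sigma> (snd y)))"
    for x y :: "'i gen list \<times> 'i gen list"
  proof -
    have "tl1 (Phiw I \<sigma> (fst (x + y))) * tr1 (Phiw I \<sigma> (snd (x + y)))
      = tl1 (Phiw I \<sigma> (fst x)) * (tl1 (Phiw I \<sigma> (fst y)) * tr1 (Phiw I \<sigma> (snd x))) * tr1 (Phiw I \<sigma> (snd y))"
      by (simp add: Phiw_append tl1_mult tr1_mult mult.assoc)
    also have "\<dots> = tl1 (Phiw I \<sigma> (fst x)) * (tr1 (Phiw I \<sigma> (snd x)) * tl1 (Phiw I \<sigma> (fst y))) * tr1 (Phiw I \<sigma> (snd y))"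
      by (simp only: tl1_tr1_comm)
    finally show ?thesis by (simp add: mult.assoc)
  qed
  show ?thesis unfolding L by (rule lext_mult) (rule M)
qed

lemma ft_tensor_one: "ft_tensor (1::('i,'k::comm_ring_1) fa) 1 = 1"
proof -
  have "ft_tensor (sng 0 1 :: ('i,'k) fa) (sng 0 1) = sng (0, 0) 1" by (simp only: ft_tensor_single) simp
  also have "\<dots> = 1" by (metis single_one zero_prod_def)
  finally show ?thesis by simp
qed

lemma ft_map_one: "ft_map (Phi I \<sigma>) 1 = (1 :: ('j,'k::comm_ring_1) ft)"
proof -
  have "ft_map (Phi I \<sigma>) (sng ([], []) 1) = (1 :: ('j,'k) ft)"
    by (simp only: ft_map_single) (simp add: Phi_one ft_tensor_one)
  then show ?thesis by simp
qed


lemma Phi_scalar: "Phi I \<sigma> (sng 0 c) = (sng 0 c :: ('j,'k::comm_ring_1) fa)"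
proof -
  have "Phi I \<sigma> (sng [] c) = (sng 0 c :: ('j,'k) fa)" by (simp only: Phi_single) (simp add: Phiw_def)
  then show ?thesis by simp
qed

lemma B_S_one: "B_S p (1::('i,'k::comm_ring_1) fa) = 1"
proof -
  have "B_S p (sng [] 1 :: ('i,'k) fa) = 1" by (simp only: B_S_eq lext_single) simp
  then show ?thesis by simp
qed

lemma B_Delta_one: "B_Delta p (1::('i,'k::comm_ring_1) fa) = 1"
proof -
  have "B_Delta p (sng [] 1 :: ('i,'k) fa) = 1" by (simp only: B_Delta_eq lext_single) simp
  then show ?thesis by simp
qed

lemma ft_tensor_one_right: "ft_tensor (sng u a) (1::('i,'k::comm_ring_1) fa) = sng (u, []) a"
proof -
  have "ft_tensor (sng u a) (sng [] 1 :: ('i,'k) fa) = sng (u, []) a" by (simp only: ft_tensor_single) simp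
  then show ?thesis by simp
qed

lemma eps_rl: "eps_gen G (rl \<sigma> g) = eps_gen G g" by (cases g) auto

locale relab =
  fixes G :: "rat set" and I :: "'i set" and p :: "'i \<Rightarrow> nat" and \<chi> :: "rat \<Rightarrow> 'k::field"
    and G' :: "rat set" and I' :: "'j set" and p' :: "'j \<Rightarrow> nat" and \<chi>' :: "rat \<Rightarrow> 'k"
    and \<sigma> :: "'i \<Rightarrow> 'j"
  assumes D: "B_data G I p \<chi>" and D': "B_data G' I' p' \<chi>'" and GG: "G' = G"
    and sig: "\<And>i. i \<in> I \<Longrightarrow> \<sigma> i \<in> I' \<and> p' (\<sigma> i) = p i"
    and chi: "\<And>i a. i \<in> I \<Longrightarrow> a \<in> G \<Longrightarrow> \<chi>' (a / of_nat (p i)) = \<chi> (a / of_nat (p i))"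
begin

abbreviation "R \<equiv> B_ideal G I p \<chi>"
abbreviation "R' \<equiv> B_ideal G' I' p' \<chi>'"
abbreviation "\<phi> \<equiv> (Phi I \<sigma> :: ('i,'k) fa \<Rightarrow> ('j,'k) fa)"

lemma rels_map: assumes r: "r \<in> B_rels G I p \<chi>" shows "\<phi> r \<in> R'"
  using r unfolding B_rels_def
proof (elim UnE)
  assume "r \<in> {fa_X 0 - fa_one}"
  then have r: "r = sng [GX 0] 1 - 1" by (simp only: fa_X_def fa_one_eq singleton_iff)
  show ?thesis unfolding r Phi_diff Phi_X Phi_one by (rule rel_X0[OF D'])
next
  assume "r \<in> {fa_mult (fa_X a) (fa_X a') - fa_X (a + a') |a a'. a \<in> G \<and> a' \<in> G}"
  then obtain a a' where r: "r = fa_mult (fa_X a) (fa_X a') - fa_X (a + a')" and a: "a \<in> G" "a' \<in> G"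
    by blast
  have a': "a \<in> G'" "a' \<in> G'" using a GG by auto
  show ?thesis unfolding r fa_mult_eq fa_X_def Phi_diff Phi_mult Phi_X by (rule rel_XX[OF D' a'])
next
  assume "r \<in> {fa_mult (fa_X a) (fa_Y i) - fa_smult (\<chi> (a / of_nat (p i))) (fa_mult (fa_Y i) (fa_X a)) |a i.
     a \<in> G \<and> i \<in> I}"
  then obtain a i where r: "r = fa_mult (fa_X a) (fa_Y i) - fa_smult (\<chi> (a / of_nat (p i))) (fa_mult (fa_Y i) (fa_X a))"
    and a: "a \<in> G" "i \<in> I"
    by blast
  have a': "a \<in> G'" using a GG by auto
  have s: "\<sigma> i \<in> I'" "p' (\<sigma> i) = p i" using sig[OF a(2)] by auto
  have "sng [GX a] 1 * sng [GY (\<sigma> i)] 1 - sng 0 (\<chi>' (a / of_nat (p' (\<sigma> i)))) * (sng [GY (\<sigma> i)] 1 * sng [GX a] 1) \<in> R'"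
    by (rule rel_XY[OF D' a' s(1)])
  then show ?thesis
    unfolding r fa_mult_eq fa_smult_eq fa_X_def fa_Y_def Phi_diff Phi_mult Phi_X Phi_Y Phi_scale
    using a s chi[OF a(2) a(1)] by (simp add: Phi_scalar)
next
  assume "r \<in> {fa_mult (fa_Y i) (fa_Y j) - fa_mult (fa_Y j) (fa_Y i) |i j. i \<in> I \<and> j \<in> I}"
  then obtain i k where r: "r = fa_mult (fa_Y i) (fa_Y k) - fa_mult (fa_Y k) (fa_Y i)" and ik: "i \<in> I" "k \<in> I"
    by blast
  show ?thesis
    unfolding r fa_mult_eq fa_Y_def Phi_diff Phi_mult Phi_Y
    using ik rel_Yc[OF D' conjunct1[OF sig[OF ik(1)]] conjunct1[OF sig[OF ik(2)]]] by simp
next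
  assume "r \<in> {Poly_Mapping.single (replicate (p i) (GY i)) 1 - Poly_Mapping.single (replicate (p j) (GY j)) 1 |i j.
     i \<in> I \<and> j \<in> I}"
  then obtain i k where r: "r = sng (replicate (p i) (GY i)) 1 - sng (replicate (p k) (GY k)) 1"
    and ik: "i \<in> I" "k \<in> I" by blast
  have v: "validw I (replicate n (GY i))" "validw I (replicate n (GY k))" for n
    using ik by (auto simp: validw_def)
  have "\<phi> r = sng (replicate (p' (\<sigma> i)) (GY (\<sigma> i))) 1 - sng (replicate (p' (\<sigma> k)) (GY (\<sigma> k))) 1"
    unfolding r Phi_diff Phi_word Phiw_eq using v sig[OF ik(1)] sig[OF ik(2)] by simp
  then show ?thesis using rel_YY[OF D' conjunct1[OF sig[OF ik(1)]] conjunct1[OF sig[OF ik(2)]]] by simp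
next
  assume "r \<in> {fa_X a |a. a \<notin> G}"
  then obtain a where r: "r = fa_X a" "a \<notin> G" by blast
  have a': "a \<notin> G'" using r(2) GG by simp
  show ?thesis unfolding r fa_X_def Phi_X by (rule rel_Xbad[OF D' a'])
next
  assume "r \<in> {fa_Y i |i. i \<notin> I}"
  then obtain i where r: "r = fa_Y i" "i \<notin> I" by blast
  show ?thesis unfolding r fa_Y_def Phi_Y using r(2) by (simp add: B_ideal_def fa_ideal.zero)
qed

lemma Phi_R: "r \<in> R \<Longrightarrow> \<phi> r \<in> R'"
  unfolding B_ideal_def
proof (rule fa_ideal_induct_hom[where h = \<phi>])
  fix s assume "s \<in> B_rels G I p \<chi>"
  then show "\<phi> s \<in> fa_ideal (B_rels G' I' p' \<chi>')" using rels_map unfolding B_ideal_def by blast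
qed (simp_all add: Phi_zero Phi_add Phi_mult)

lemma Phi_eps: "B_eps G' (\<phi> f) = B_eps G f"
proof -
  have w: "lext (\<lambda>w'. sng (0::rat) (epsw G' w')) (Phiw I \<sigma> w :: ('j,'k) fa) = sng 0 (epsw G w)" for w :: "'i gen list"
  proof (cases "validw I w")
    case True
    have "epsw G' (map (rl \<sigma>) w) = (epsw G w :: 'k)"
      unfolding epsw_def GG by (simp add: comp_def eps_rl)
    then show ?thesis using True by (simp add: Phiw_eq)
  next
    case False
    then obtain i where "GY i \<in> set w" by (auto simp: validw_def)
    then have "epsw G w = (0::'k)" unfolding epsw_def by (induction w) auto
    then show ?thesis using False by (simp add: Phiw_eq)
  qed
  have "lext (\<lambda>w'. sng (0::rat) (epsw G' w')) (\<phi> f) = lext (\<lambda>w. sng 0 (epsw G w)) f"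
    unfolding Phi_def lext_compose by (rule lext_cong) (rule w)
  then show ?thesis by (simp add: B_eps_eq)
qed

lemma Phi_Delta_word: "ft_map \<phi> (delta_word p w) = B_Delta p' (Phiw I \<sigma> w)"
proof (induction w)
  case Nil
  show ?case by (simp add: ft_map_one Phiw_def B_Delta_one)
next
  case (Cons g w)
  have g: "ft_map \<phi> (delta_gen p g) = B_Delta p' (Phigen I \<sigma> g)"
  proof (cases g)
    case (GX a)
    then show ?thesis by (simp add: ft_map_single ft_tensor_single Phi_X Delta_X)
  next
    case (GY i)
    show ?thesis
    proof (cases "i \<in> I")
      case True
      have "1 / of_nat (p' (\<sigma> i)) = (1 / of_nat (p i) :: rat)" using sig[OF True] by simp
      then show ?thesis using GY True
        by (simp add: ft_map_single ft_map_add ft_tensor_single Phi_X Phi_Y Phi_scalar Phi_one Delta_Y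
            ft_tensor_one_right)
    next
      case False
      then show ?thesis using GY
        by (simp add: ft_map_single ft_map_add Phi_Y ft_tensor_zero B_Delta_eq)
    qed
  qed
  have "ft_map \<phi> (delta_word p (g # w)) = ft_map \<phi> (delta_gen p g) * ft_map \<phi> (delta_word p w)"
    by (simp add: ft_map_Phi_mult)
  also have "\<dots> = B_Delta p' (Phigen I \<sigma> g * Phiw I \<sigma> w)" by (simp add: g Cons B_Delta_mult)
  finally show ?case by (simp add: Phiw_def)
qed

lemma Phi_Delta: "ft_map \<phi> (B_Delta p f) = B_Delta p' (\<phi> f)"
proof -
  have "ft_map \<phi> (B_Delta p f) = lext (\<lambda>w. ft_map \<phi> (delta_word p w)) f"
    by (simp add: B_Delta_eq ft_map_eq lext_compose)
  also have "\<dots> = lext (\<lambda>w. B_Delta p' (Phiw I \<sigma> w)) f" by (simp add: Phi_Delta_word)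
  also have "\<dots> = B_Delta p' (\<phi> f)" by (simp add: B_Delta_eq Phi_def lext_compose)
  finally show ?thesis .
qed

lemma B_S_antimult: "B_S p' (x * y) = B_S p' y * B_S p' x"
  unfolding B_S_eq by (rule lext_antimult) (simp add: S_word_append)

lemma Phi_S_word: "\<phi> (S_word p w) = B_S p' (Phiw I \<sigma> w)"
proof (induction w)
  case Nil
  show ?case by (simp add: Phi_one Phiw_def B_S_one)
next
  case (Cons g w)
  have g: "\<phi> (S_gen p g) = B_S p' (Phigen I \<sigma> g)"
  proof (cases g)
    case (GX a)
    then show ?thesis by (simp add: fa_X_def Phi_X B_S_eq)
  next
    case (GY i)
    show ?thesis
    proof (cases "i \<in> I")
      case True
      have "1 / of_nat (p' (\<sigma> i)) = (1 / of_nat (p i) :: rat)" using sig[OF True] by simp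
      then show ?thesis using GY True
        by (simp add: fa_X_def fa_Y_def Phi_uminus Phi_mult Phi_X Phi_Y B_S_eq)
    next
      case False
      then show ?thesis using GY by (simp add: fa_Y_def Phi_uminus Phi_mult Phi_Y B_S_eq)
    qed
  qed
  have "\<phi> (S_word p (g # w)) = \<phi> (S_word p w) * \<phi> (S_gen p g)" by (simp add: Phi_mult)
  also have "\<dots> = B_S p' (Phigen I \<sigma> g * Phiw I \<sigma> w)" by (simp add: g Cons B_S_antimult)
  finally show ?case by (simp add: Phiw_def)
qed

lemma Phi_S: "\<phi> (B_S p f) = B_S p' (\<phi> f)"
proof -
  have "\<phi> (B_S p f) = lext (\<lambda>w. \<phi> (S_word p w)) f"
    by (simp add: B_S_eq Phi_def lext_compose)
  also have "\<dots> = lext (\<lambda>w. B_S p' (Phiw I \<sigma> w)) f" by (simp add: Phi_S_word)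
  also have "\<dots> = B_S p' (\<phi> f)" by (simp add: B_S_eq Phi_def lext_compose)
  finally show ?thesis .
qed

lemma invalid_R: "\<not> validw I w \<Longrightarrow> (sng w 1 :: ('i,'k) fa) \<in> R"
proof -
  assume "\<not> validw I w"
  then obtain i where i: "GY i \<in> set w" "i \<notin> I" by (auto simp: validw_def)
  then obtain u v where w: "w = u @ GY i # v" by (meson split_list)
  have "(sng w 1 :: ('i,'k) fa) = sng u 1 * sng [GY i] 1 * sng v 1" by (simp add: w mult_single)
  also have "\<dots> \<in> R" using rel_Ybad[OF D i(2)] unfolding B_ideal_def by (rule fa_ideal_mult3)
  finally show ?thesis .
qed

end


lemma comp_id:
  fixes \<chi> :: "rat \<Rightarrow> 'k::field" and \<sigma> :: "'i \<Rightarrow> 'j" and f :: "('i,'k) fa"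
  assumes r1: "relab G I p \<chi> G' I' p' \<chi>' \<sigma>" and r2: "relab G' I' p' \<chi>' G I p \<chi> \<sigma>'"
    and inv: "\<And>i. i \<in> I \<Longrightarrow> \<sigma>' (\<sigma> i) = i"
  shows "f - Phi I' \<sigma>' (Phi I \<sigma> f) \<in> B_ideal G I p \<chi>"
proof -
  have w: "(sng w 1 :: ('i,'k) fa) - Phi I' \<sigma>' (Phiw I \<sigma> w) \<in> B_ideal G I p \<chi>" for w
  proof (cases "validw I w")
    case True
    have v: "validw I' (map (rl \<sigma>) w)"
      unfolding validw_def
    proof (intro allI impI)
      fix j assume "GY j \<in> set (map (rl \<sigma>) w)"
      then obtain x where x: "x \<in> set w" "rl \<sigma> x = GY j" by auto
      show "j \<in> I'"
      proof (cases x)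
        case (GX a) then show ?thesis using x by simp
      next
        case (GY i)
        then have "i \<in> I" "j = \<sigma> i" using x True unfolding validw_def by auto
        then show ?thesis using relab.sig[OF r1] by blast
      qed
    qed
    have m: "map (rl \<sigma>') (map (rl \<sigma>) w) = w"
      using True
    proof (induction w)
      case Nil then show ?case by simp
    next
      case (Cons g w)
      then show ?case by (cases g) (auto simp: inv)
    qed
    have "(sng w 1 :: ('i,'k) fa) - Phi I' \<sigma>' (Phiw I \<sigma> w) = 0"
      using True v m by (simp add: Phiw_eq Phi_word)
    then show ?thesis by (simp add: B_ideal_def fa_ideal.zero)
  next
    case False
    then show ?thesis using relab.invalid_R[OF r1 False] by (simp add: Phiw_eq Phi_zero)
  qed
  have c: "Phi I' \<sigma>' (Phi I \<sigma> f) = lext (\<lambda>w. Phi I' \<sigma>' (Phiw I \<sigma> w)) f"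
    by (simp only: Phi_def lext_compose)
  have "f - Phi I' \<sigma>' (Phi I \<sigma> f) = lext (\<lambda>w. sng w 1 - Phi I' \<sigma>' (Phiw I \<sigma> w)) f"
    unfolding c lext_diff_fun[symmetric] lext_id ..
  also have "\<dots> \<in> B_ideal G I p \<chi>" unfolding B_ideal_def by (rule fa_ideal_lext) (use w in \<open>simp add: B_ideal_def\<close>)
  finally show ?thesis .
qed

theorem proposition2p5:
  fixes G G' :: "rat set" and I :: "'i set" and I' :: "'j set"
    and p :: "'i \<Rightarrow> nat" and p' :: "'j \<Rightarrow> nat"
    and \<chi> \<chi>' :: "rat \<Rightarrow> 'k::field_char_0"
  assumes "alg_closed TYPE('k)"
    and "B_data G I p \<chi>"
    and "B_data G' I' p' \<chi>'"
  shows "(\<exists>\<phi>. hopf_iso_B G I p \<chi> G' I' p' \<chi>' \<phi>) \<longleftrightarrow>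
           (G = G' \<and> p ` I = p' ` I' \<and> (\<forall>q\<in>GM G I p. \<chi> q = \<chi>' q))"
proof
  assume "\<exists>\<phi>. hopf_iso_B G I p \<chi> G' I' p' \<chi>' \<phi>"
  then obtain \<phi> where h: "hopf_iso_B G I p \<chi> G' I' p' \<chi>' \<phi>" by blast
  interpret isoB G I p \<chi> G' I' p' \<chi>' \<phi>
    by unfold_locales (rule assms(2), rule assms(3), rule h)
  show "G = G' \<and> p ` I = p' ` I' \<and> (\<forall>q\<in>GM G I p. \<chi> q = \<chi>' q)" by (rule onlyif)
next
  assume h: "G = G' \<and> p ` I = p' ` I' \<and> (\<forall>q\<in>GM G I p. \<chi> q = \<chi>' q)"
  have D: "B_data G I p \<chi>" and D': "B_data G' I' p' \<chi>'" using assms by auto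
  define \<sigma> where "\<sigma> i = (SOME j. j \<in> I' \<and> p' j = p i)" for i
  define \<sigma>' where "\<sigma>' j = (SOME i. i \<in> I \<and> p i = p' j)" for j
  have s1: "\<sigma> i \<in> I' \<and> p' (\<sigma> i) = p i" if i: "i \<in> I" for i
  proof -
    have "p i \<in> p' ` I'" using h i by blast
    then have "\<exists>j. j \<in> I' \<and> p' j = p i" by (metis image_iff)
    then show ?thesis unfolding \<sigma>_def by (rule someI_ex)
  qed
  have s2: "\<sigma>' j \<in> I \<and> p (\<sigma>' j) = p' j" if j: "j \<in> I'" for j
  proof -
    have "p' j \<in> p ` I" using h j by blast
    then have "\<exists>i. i \<in> I \<and> p i = p' j" by (metis image_iff)
    then show ?thesis unfolding \<sigma>'_def by (rule someI_ex)
  qed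
  have inv1: "\<sigma>' (\<sigma> i) = i" if i: "i \<in> I" for i
  proof (rule ccontr)
    assume ne: "\<sigma>' (\<sigma> i) \<noteq> i"
    have a: "\<sigma>' (\<sigma> i) \<in> I" "p (\<sigma>' (\<sigma> i)) = p i" using s1[OF i] s2 by auto
    have "coprime (p (\<sigma>' (\<sigma> i))) (p i)" using D_cop[OF D a(1) i ne] .
    then show False using a(2) D_p2[OF D i] by simp
  qed
  have inv2: "\<sigma> (\<sigma>' j) = j" if j: "j \<in> I'" for j
  proof (rule ccontr)
    assume ne: "\<sigma> (\<sigma>' j) \<noteq> j"
    have a: "\<sigma> (\<sigma>' j) \<in> I'" "p' (\<sigma> (\<sigma>' j)) = p' j" using s2[OF j] s1 by auto
    have "coprime (p' (\<sigma> (\<sigma>' j))) (p' j)" using D_cop[OF D' a(1) j ne] .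
    then show False using a(2) D_p2[OF D' j] by simp
  qed
  have r1: "relab G I p \<chi> G' I' p' \<chi>' \<sigma>"
  proof (unfold_locales)
    show "G' = G" using h by simp
    show "\<sigma> i \<in> I' \<and> p' (\<sigma> i) = p i" if "i \<in> I" for i using s1 that .
    show "\<chi>' (a / of_nat (p i)) = \<chi> (a / of_nat (p i))" if "i \<in> I" "a \<in> G" for i a
      using h GM_mem[OF that] by simp
  qed (rule D, rule D')
  have r2: "relab G' I' p' \<chi>' G I p \<chi> \<sigma>'"
  proof (unfold_locales)
    show "G = G'" using h by simp
    show "\<sigma>' j \<in> I \<and> p (\<sigma>' j) = p' j" if "j \<in> I'" for j using s2 that .
    show "\<chi> (a / of_nat (p' j)) = \<chi>' (a / of_nat (p' j))" if j: "j \<in> I'" and a: "a \<in> G'" for j a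
    proof -
      have "a / of_nat (p (\<sigma>' j)) \<in> GM G I p" using GM_mem[OF conjunct1[OF s2[OF j]]] a h by simp
      then show ?thesis using h s2[OF j] by simp
    qed
  qed (rule D', rule D)
  let ?\<phi> = "Phi I \<sigma> :: ('i,'k) fa \<Rightarrow> ('j,'k) fa"
  let ?\<psi> = "Phi I' \<sigma>' :: ('j,'k) fa \<Rightarrow> ('i,'k) fa"
  have c1: "f - ?\<psi> (?\<phi> f) \<in> B_ideal G I p \<chi>" for f by (rule comp_id[OF r1 r2 inv1])
  have c2: "g - ?\<phi> (?\<psi> g) \<in> B_ideal G' I' p' \<chi>'" for g by (rule comp_id[OF r2 r1 inv2])
  have "hopf_iso_B G I p \<chi> G' I' p' \<chi>' ?\<phi>"
    unfolding hopf_iso_B_def Let_def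
  proof (intro conjI allI)
    show "?\<phi> (f + g) = ?\<phi> f + ?\<phi> g" for f g by (rule Phi_add)
    show "?\<phi> (fa_smult c f) = fa_smult c (?\<phi> f)" for c f by (simp add: Phi_scale)
    show "f \<in> B_ideal G I p \<chi> \<longleftrightarrow> ?\<phi> f \<in> B_ideal G' I' p' \<chi>'" for f
    proof
      assume "f \<in> B_ideal G I p \<chi>" then show "?\<phi> f \<in> B_ideal G' I' p' \<chi>'" by (rule relab.Phi_R[OF r1])
    next
      assume "?\<phi> f \<in> B_ideal G' I' p' \<chi>'"
      then have "?\<psi> (?\<phi> f) \<in> B_ideal G I p \<chi>" by (rule relab.Phi_R[OF r2])
      then have "(f - ?\<psi> (?\<phi> f)) + ?\<psi> (?\<phi> f) \<in> B_ideal G I p \<chi>"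
        using c1 unfolding B_ideal_def by (rule fa_ideal.add[rotated])
      then show "f \<in> B_ideal G I p \<chi>" by simp
    qed
    show "\<exists>f. g - ?\<phi> f \<in> B_ideal G' I' p' \<chi>'" for g using c2 by blast
    show "?\<phi> (fa_mult f g) - fa_mult (?\<phi> f) (?\<phi> g) \<in> B_ideal G' I' p' \<chi>'" for f g
      by (simp add: Phi_mult B_ideal_def fa_ideal.zero)
    show "?\<phi> fa_one - fa_one \<in> B_ideal G' I' p' \<chi>'"
      by (simp add: Phi_one B_ideal_def fa_ideal.zero)
    show "ft_map ?\<phi> (B_Delta p f) - B_Delta p' (?\<phi> f) \<in> ft_ideal (B_ideal G' I' p' \<chi>')" for f
      by (simp add: relab.Phi_Delta[OF r1] ft_ideal.zero)
    show "B_eps G' (?\<phi> f) = B_eps G f" for f by (rule relab.Phi_eps[OF r1])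
    show "?\<phi> (B_S p f) - B_S p' (?\<phi> f) \<in> B_ideal G' I' p' \<chi>'" for f
      by (simp add: relab.Phi_S[OF r1] B_ideal_def fa_ideal.zero)
  qed
  then show "\<exists>\<phi>. hopf_iso_B G I p \<chi> G' I' p' \<chi>' \<phi>" by blast
qed


end
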